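(* Let $R$ be a characteristic zero ring, $p$ an odd prime with $\bigcap_{s\ge1}p^sR=\{0\}$, and suppose $R$ is $p$-adically complete. Let $f\in R[x]$ be a monic polynomial of degree $d\ge2$ with $f(0)\ne0$ whose discriminant is invertible in $R$. Then $$\Omega_f^\circ\cap d\mathcal{O}_{\rm formal}= d\mathcal{O}_f .$$
   Context: $\mathcal{O}_f^\circ$ is the $R$-module generated by the rational functions $l!\,\frac{x^k}{f^{l+1}}$ with integers $l\ge0$ and $0\le k\le d(l+1)-2$; $\mathcal{O}_f$ is defined in the same way but with $0\le k\le d(l+1)-1$. Put $\Omega_f^\circ=\mathcal{O}_f^\circ\,dx$ and $d\mathcal{O}_f=\{dG: G\in\mathcal{O}_f\}$. Let $\mathcal{O}_{\rm formal}=\frac1xR[[1/x]]$ and $\Omega_{\rm formal}=\frac1x\mathcal{O}_{\rm formal}\,dx$; $d\mathcal{O}_{\rm formal}$ is the set of formal derivatives $dG$, $G\in\mathcal{O}_{\rm formal}$ (the "formally exact forms"). Elements of $\Omega_f^\circ$ are regarded as elements of $\Omega_{\rm formal}$ via expansion in powers of $1/x$ (possible since $f$ is monic). *)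

theory Defs
  imports "Subresultants.Resultant_Prelim" "HOL-Computational_Algebra.Polynomial_FPS"
begin

(* formal derivative over an arbitrary commutative ring (library pderiv needs no zero divisors) *)
definition formal_deriv :: "'a::comm_ring_1 poly \<Rightarrow> 'a poly" where
  "formal_deriv f = Poly (map (\<lambda>i. of_nat (Suc i) * coeff f (Suc i)) [0..<degree f])"

definition monic_discriminant :: "'a::comm_ring_1 poly \<Rightarrow> 'a" where
  "monic_discriminant f = (-1) ^ (degree f * (degree f - 1) div 2) * resultant f (formal_deriv f)"

definition p_adically_separated :: "nat \<Rightarrow> 'a::comm_ring_1 itself \<Rightarrow> bool" where
  "p_adically_separated p _ \<longleftrightarrow> (\<forall>x::'a. (\<forall>s\<ge>1. (of_nat p) ^ s dvd x) \<longrightarrow> x = 0)"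

definition p_adically_complete :: "nat \<Rightarrow> 'a::comm_ring_1 itself \<Rightarrow> bool" where
  "p_adically_complete p _ \<longleftrightarrow>
     (\<forall>a :: nat \<Rightarrow> 'a.
        (\<forall>s. \<exists>N. \<forall>m\<ge>N. \<forall>n\<ge>N. (of_nat p) ^ s dvd (a m - a n)) \<longrightarrow>
        (\<exists>L. \<forall>s. \<exists>N. \<forall>n\<ge>N. (of_nat p) ^ s dvd (a n - L)))"

(* Expansions in y = 1/x.  With F(y) = y^d f(1/y) = reflect_poly f (F(0) = 1 as f is monic),
   x^k / f^(l+1) = y^(d(l+1)-k) * F(y)^(-(l+1)). *)
definition rev_inv :: "'a::comm_ring_1 poly \<Rightarrow> 'a fps" where
  "rev_inv f = fps_right_inverse (fps_of_poly (reflect_poly f)) 1"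

definition gen_fps :: "'a::comm_ring_1 poly \<Rightarrow> nat \<Rightarrow> nat \<Rightarrow> 'a fps" where
  "gen_fps f l k = fps_const (of_nat (fact l)) * fps_X ^ (degree f * (l + 1) - k) * (rev_inv f) ^ (l + 1)"

(* R-module generated by the expansions of l! x^k / f^(l+1), (l,k) in the index set *)
definition span_gens :: "'a::comm_ring_1 poly \<Rightarrow> (nat \<times> nat) set \<Rightarrow> 'a fps set" where
  "span_gens f I = {(\<Sum>(l,k)\<in>S. fps_const (c (l,k)) * gen_fps f l k) | S c. finite S \<and> S \<subseteq> I}"

definition O_f_circ :: "'a::comm_ring_1 poly \<Rightarrow> 'a fps set" where
  "O_f_circ f = span_gens f {(l,k). k + 2 \<le> degree f * (l + 1)}"

definition O_f :: "'a::comm_ring_1 poly \<Rightarrow> 'a fps set" where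
  "O_f f = span_gens f {(l,k). k + 1 \<le> degree f * (l + 1)}"

(* O_formal = (1/x) R[[1/x]] : series in y = 1/x with zero constant term *)
definition O_formal :: "'a::comm_ring_1 fps set" where
  "O_formal = {G. fps_nth G 0 = 0}"

(* A differential form h(y) dx is represented by its coefficient h.
   d G = (dG/dx) dx = -y^2 G'(y) dx. *)
definition d_form :: "'a::comm_ring_1 fps \<Rightarrow> 'a fps" where
  "d_form G = - (fps_X ^ 2 * fps_deriv G)"

(* Omega_f^circ = O_f^circ dx, represented by coefficients of dx *)
definition Omega_f_circ :: "'a::comm_ring_1 poly \<Rightarrow> 'a fps set" where
  "Omega_f_circ f = O_f_circ f"

end

theory Submission
  imports Defs "HOL-Computational_Algebra.Primes" "HOL-Computational_Algebra.Formal_Laurent_Series"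
begin


lemma coeff_formal_deriv: "coeff (formal_deriv f) n = of_nat (Suc n) * coeff f (Suc n)"
proof (cases "n < degree f")
  case True
  then show ?thesis unfolding formal_deriv_def by (simp add: nth_default_def)
next
  case False
  then have "coeff f (Suc n) = 0" by (intro coeff_eq_0) auto
  with False show ?thesis unfolding formal_deriv_def by (simp add: nth_default_def)
qed

lemma formal_deriv_pCons: "formal_deriv (pCons a p) = p + pCons 0 (formal_deriv p)"
  by (rule poly_eqI) (auto simp: coeff_formal_deriv coeff_pCons algebra_simps split: nat.split)

lemma sum_monom_rev:
  fixes P :: "'a::comm_semiring_1 poly"
  assumes "degree P \<le> N" "coeff P 0 = 0"
  shows "(\<Sum>j<N. monom (coeff P (N-j)) (N-j)) = P"
proof -
  have "(\<Sum>j<N. monom (coeff P (N-j)) (N-j)) = (\<Sum>k\<in>{1..N}. monom (coeff P k) k)"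
  proof (rule sum.reindex_bij_witness[of _ "\<lambda>k. N - k" "\<lambda>j. N - j"])
  qed auto
  also have "\<dots> = (\<Sum>k\<in>insert 0 {1..N}. monom (coeff P k) k)"
    using assms(2) by (subst sum.insert) auto
  also have "insert 0 {1..N} = {..N}" by auto
  also have "(\<Sum>k\<le>N. monom (coeff P k) k) = P" using poly_as_sum_of_monoms'[OF assms(1)] .
  finally show ?thesis .
qed

lemma coeff_monom_Suc_mult_0: "coeff (monom (1::'a::comm_semiring_1) (Suc k) * f) 0 = 0"
  by (simp add: monom_Suc)

interpretation cpoly: comm_ring_hom "\<lambda>c::'a::comm_ring_1. [:c:]"
  by unfold_locales auto

lemma resultant_bezout:
  fixes f g :: "'a::comm_ring_1 poly"
  assumes N0: "degree f + degree g > 0"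
  shows "\<exists>u v. [:resultant f g:] = u * f + v * g"
proof -
  define m where "m = degree f"
  define n where "n = degree g"
  define N where "N = m + n"
  define S where "S = sylvester_mat f g"
  define S' where "S' = map_mat (\<lambda>c. [:c:]) S"
  define X where "X = vec N (\<lambda>j. monom (1::'a) (N - j))"
  define P where "P = (\<lambda>i. if i < n then monom (1::'a) (n-i) * f else monom 1 (N-i) * g)"
  have S: "S \<in> carrier_mat N N" unfolding S_def N_def m_def n_def by auto
  have S': "S' \<in> carrier_mat N N" using S unfolding S'_def by auto
  have X: "X \<in> carrier_vec N" unfolding X_def by auto
  have N1: "N \<ge> 1" using N0 unfolding N_def m_def n_def by auto
  have SX: "S' *\<^sub>v X = vec N P"
  proof (rule eq_vecI)
    fix i assume "i < dim_vec (vec N P)"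
    then have i: "i < N" by auto
    have degP: "degree (P i) \<le> N"
    proof (cases "i < n")
      case True
      then have "degree (P i) \<le> (n - i) + m"
        unfolding P_def m_def using True degree_mult_le[of "monom (1::'a) (n-i)" f] degree_monom_le[of "1::'a" "n-i"]
        by simp
      then show ?thesis unfolding N_def using True by auto
    next
      case False
      then have "degree (P i) \<le> (N - i) + n"
        unfolding P_def n_def using False degree_mult_le[of "monom (1::'a) (N-i)" g] degree_monom_le[of "1::'a" "N-i"]
        by simp
      then show ?thesis unfolding N_def using False i N_def by auto
    qed
    have c0: "coeff (P i) 0 = 0"
    proof (cases "i < n")
      case True
      then obtain k where "n - i = Suc k" using not0_implies_Suc[of "n-i"] by auto
      then show ?thesis unfolding P_def using True coeff_monom_Suc_mult_0 by metis
    next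
      case False
      then obtain k where "N - i = Suc k" using i not0_implies_Suc[of "N-i"] by auto
      then show ?thesis unfolding P_def using False coeff_monom_Suc_mult_0 by metis
    qed
    have "(S' *\<^sub>v X) $ i = row S' i \<bullet> X" using i S' by simp
    also have "\<dots> = (\<Sum>j\<in>{0..<N}. row S' i $ j * X $ j)" unfolding scalar_prod_def using X by simp
    also have "\<dots> = (\<Sum>j<N. [:S $$ (i,j):] * monom 1 (N - j))"
      using i S S' unfolding S'_def X_def
      by (auto intro!: sum.cong simp: lessThan_atLeast0)
    also have "\<dots> = (\<Sum>j<N. monom (coeff (P i) (N-j)) (N-j))"
    proof (rule sum.cong[OF refl])
      fix j assume j: "j \<in> {..<N}"
      have "S $$ (i,j) = coeff (P i) (N-j)"
        unfolding S_def P_def using i j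
        by (subst sylvester_index_mat2) (auto simp: N_def m_def n_def)
      then show "[:S $$ (i,j):] * monom 1 (N - j) = monom (coeff (P i) (N-j)) (N-j)"
        by (simp add: smult_monom)
    qed
    also have "\<dots> = P i" by (rule sum_monom_rev[OF degP c0])
    finally show "(S' *\<^sub>v X) $ i = vec N P $ i" using i by simp
  qed (use S' in auto)
  obtain A where A: "A = adj_mat S'" by auto
  have A1: "A \<in> carrier_mat N N" and A2: "A * S' = det S' \<cdot>\<^sub>m 1\<^sub>m N"
    using adj_mat[OF S'] A by auto
  have detS: "det S' = [:resultant f g:]"
    unfolding S'_def S_def resultant_def by simp
  have "(A * S') *\<^sub>v X = A *\<^sub>v vec N P" using A1 S' X SX by simp
  then have H1: "((det S' \<cdot>\<^sub>m 1\<^sub>m N) *\<^sub>v X) $ (N-1) = (A *\<^sub>v vec N P) $ (N-1)" using A2 by simp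
  have H2: "((det S' \<cdot>\<^sub>m 1\<^sub>m N) *\<^sub>v X) $ (N-1) = det S' * monom 1 1"
  proof -
    have "((det S' \<cdot>\<^sub>m 1\<^sub>m N) *\<^sub>v X) $ (N-1) = det S' * X $ (N-1)"
      using N1 X by auto
    then show ?thesis using N1 unfolding X_def by simp
  qed
  have H3: "(A *\<^sub>v vec N P) $ (N-1) = (\<Sum>i<N. A $$ (N-1, i) * P i)"
    using N1 A1 by (auto intro!: sum.cong simp: lessThan_atLeast0 scalar_prod_def)
  define U where "U = (\<Sum>i<N. if i < n then A $$ (N-1, i) * monom 1 (n-i-1) else 0)"
  define V where "V = (\<Sum>i<N. if i < n then 0 else A $$ (N-1, i) * monom 1 (N-i-1))"
  have H4: "(\<Sum>i<N. A $$ (N-1, i) * P i) = monom 1 1 * (U * f + V * g)"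
  proof -
    have "(\<Sum>i<N. A $$ (N-1, i) * P i) = (\<Sum>i<N. monom 1 1 *
      ((if i < n then A $$ (N-1, i) * monom 1 (n-i-1) else 0) * f +
       (if i < n then 0 else A $$ (N-1, i) * monom 1 (N-i-1)) * g))"
    proof (rule sum.cong[OF refl])
      fix i assume i: "i \<in> {..<N}"
      show "A $$ (N-1, i) * P i = monom 1 1 *
      ((if i < n then A $$ (N-1, i) * monom 1 (n-i-1) else 0) * f +
       (if i < n then 0 else A $$ (N-1, i) * monom 1 (N-i-1)) * g)"
      proof (cases "i < n")
        case True
        then have "monom (1::'a) (n-i) = monom 1 1 * monom 1 (n-i-1)" by (simp add: mult_monom Suc_diff_Suc)
        then show ?thesis using True unfolding P_def by (simp add: algebra_simps)
      next
        case False
        then have "monom (1::'a) (N-i) = monom 1 1 * monom 1 (N-i-1)" using i by (simp add: mult_monom Suc_diff_Suc)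
        then show ?thesis using False unfolding P_def by (simp add: algebra_simps)
      qed
    qed
    also have "\<dots> = monom 1 1 * (U * f + V * g)"
      unfolding U_def V_def distrib_left sum.distrib sum_distrib_left[symmetric] sum_distrib_right[symmetric] by (rule refl)
    finally show ?thesis .
  qed
  have eq: "det S' * monom 1 1 = monom 1 1 * (U * f + V * g)"
    using H1 H2 H3 H4 by argo
  have x1: "monom (1::'a) 1 = pCons 0 1" by (simp add: monom_Suc)
  have canc: "a * monom (1::'a) 1 = monom 1 1 * b \<Longrightarrow> a = b" for a b :: "'a poly"
    unfolding x1 by (simp add: mult_pCons_right mult_pCons_left)
  have "det S' = U * f + V * g" using canc[OF eq] .
  then show ?thesis using detS by auto
qed



definition pcong :: "nat \<Rightarrow> 'b::comm_ring_1 \<Rightarrow> 'b \<Rightarrow> bool" where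
  "pcong p a b \<longleftrightarrow> (\<exists>c. a - b = of_nat p * c)"

lemma pcong_refl[simp]: "pcong p a a" unfolding pcong_def by (intro exI[of _ 0]) simp

lemma pcong_sym: "pcong p a b \<Longrightarrow> pcong p b a"
  unfolding pcong_def by (metis minus_diff_eq mult_minus_right)

lemma pcong_trans: "pcong p a b \<Longrightarrow> pcong p b c \<Longrightarrow> pcong p a c"
  unfolding pcong_def by (metis (no_types, lifting) diff_add_cancel add_diff_eq distrib_left diff_diff_eq2)

lemma pcong_add: "pcong p a b \<Longrightarrow> pcong p c e \<Longrightarrow> pcong p (a + c) (b + e)"
  unfolding pcong_def by (metis (no_types, lifting) add_diff_add distrib_left)

lemma pcong_mult_left: "pcong p a b \<Longrightarrow> pcong p (c * a) (c * b)"
  unfolding pcong_def by (metis mult.left_commute right_diff_distrib)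

lemma pcong_mult_right: "pcong p a b \<Longrightarrow> pcong p (a * c) (b * c)"
  using pcong_mult_left[of p a b c] by (simp add: mult.commute)

lemma pcong_sum: "(\<And>i. i \<in> A \<Longrightarrow> pcong p (f i) (g i)) \<Longrightarrow> pcong p (\<Sum>i\<in>A. f i) (\<Sum>i\<in>A. g i)"
  by (induction A rule: infinite_finite_induct) (auto intro: pcong_add)

lemma freshman:
  fixes a b :: "'b::comm_ring_1"
  assumes p: "prime p"
  shows "pcong p ((a + b) ^ p) (a ^ p + b ^ p)"
proof -
  have p0: "p > 0" using p prime_gt_0_nat by blast
  have "(a + b) ^ p = (\<Sum>k\<le>p. of_nat (p choose k) * a ^ k * b ^ (p - k))"
    by (rule binomial_ring)
  also have "\<dots> = (\<Sum>k\<in>{0,p}. of_nat (p choose k) * a ^ k * b ^ (p - k)) +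
      (\<Sum>k\<in>{..p} - {0,p}. of_nat (p choose k) * a ^ k * b ^ (p - k))"
    by (subst sum.subset_diff[of "{0,p}"]) auto
  also have "(\<Sum>k\<in>{0,p}. of_nat (p choose k) * a ^ k * b ^ (p - k)) = a ^ p + b ^ p"
    using p0 by simp
  finally have eq: "(a + b) ^ p - (a ^ p + b ^ p) = (\<Sum>k\<in>{..p} - {0,p}. of_nat (p choose k) * a ^ k * b ^ (p - k))"
    by simp
  have "\<forall>k\<in>{..p} - {0,p}. \<exists>c. of_nat (p choose k) * a ^ k * b ^ (p - k) = of_nat p * c"
  proof
    fix k assume k: "k \<in> {..p} - {0,p}"
    then have "p dvd (p choose k)" using p by (intro dvd_choose_prime) auto
    then obtain m where "p choose k = p * m" by auto
    then show "\<exists>c. of_nat (p choose k) * a ^ k * b ^ (p - k) = of_nat p * c"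
      by (intro exI[of _ "of_nat m * a ^ k * b ^ (p - k)"]) (simp add: algebra_simps)
  qed
  then obtain c where c: "\<And>k. k\<in>{..p} - {0,p} \<Longrightarrow> of_nat (p choose k) * a ^ k * b ^ (p - k) = of_nat p * c k"
    by metis
  have "(\<Sum>k\<in>{..p} - {0,p}. of_nat (p choose k) * a ^ k * b ^ (p - k)) = of_nat p * (\<Sum>k\<in>{..p} - {0,p}. c k)"
    by (simp add: sum_distrib_left c)
  then show ?thesis unfolding pcong_def using eq by metis
qed

lemma freshman_sum:
  fixes g :: "nat \<Rightarrow> 'b::comm_ring_1"
  assumes p: "prime p"
  shows "pcong p ((\<Sum>i\<in>A. g i) ^ p) (\<Sum>i\<in>A. g i ^ p)"
proof (induction A rule: infinite_finite_induct)
  case (infinite A)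
  then show ?case using p prime_gt_0_nat by (simp add: zero_power)
next
  case empty
  then show ?case using p prime_gt_0_nat by (simp add: zero_power)
next
  case (insert x F)
  then have "pcong p ((g x + sum g F) ^ p) (g x ^ p + (sum g F) ^ p)" using freshman[OF p] by blast
  moreover have "pcong p (g x ^ p + (sum g F) ^ p) (g x ^ p + (\<Sum>i\<in>F. g i ^ p))"
    using insert by (intro pcong_add) auto
  ultimately show ?case using insert by (auto intro: pcong_trans)
qed

lemma freshman_poly:
  fixes E :: "'b::comm_ring_1 poly"
  assumes p: "prime p"
  shows "pcong p (E ^ p) (\<Sum>j\<le>degree E. monom (coeff E j ^ p) (p * j))"
proof -
  have "E = (\<Sum>j\<le>degree E. monom (coeff E j) j)" by (simp add: poly_as_sum_of_monoms)
  then have "E ^ p = (\<Sum>j\<le>degree E. monom (coeff E j) j) ^ p" by simp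
  moreover have "pcong p ((\<Sum>j\<le>degree E. monom (coeff E j) j) ^ p) (\<Sum>j\<le>degree E. monom (coeff E j) j ^ p)"
    by (rule freshman_sum[OF p])
  moreover have "(\<Sum>j\<le>degree E. monom (coeff E j) j ^ p) = (\<Sum>j\<le>degree E. monom (coeff E j ^ p) (p * j))"
    by (simp add: monom_power mult.commute)
  ultimately show ?thesis by simp
qed

definition sparse :: "nat \<Rightarrow> 'b::zero poly \<Rightarrow> bool" where
  "sparse N q \<longleftrightarrow> (\<forall>k. coeff q k \<noteq> 0 \<longrightarrow> N dvd k)"

lemma sparse_0[simp]: "sparse N 0" unfolding sparse_def by simp
lemma sparse_1[simp]: "sparse 1 q" unfolding sparse_def by simp
lemma sparse_add: "sparse N a \<Longrightarrow> sparse N b \<Longrightarrow> sparse N (a + b)"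
  unfolding sparse_def by (metis add.left_neutral add.right_neutral coeff_add)
lemma sparse_smult: "sparse N a \<Longrightarrow> sparse N (smult c a)"
  unfolding sparse_def by (metis coeff_smult mult_zero_right)
lemma sparse_sum: "(\<And>i. i \<in> A \<Longrightarrow> sparse N (f i)) \<Longrightarrow> sparse N (\<Sum>i\<in>A. f i)"
  by (induction A rule: infinite_finite_induct) (auto intro: sparse_add)
lemma sparse_monom: "N dvd k \<Longrightarrow> sparse N (monom c k)"
  unfolding sparse_def by (auto simp: coeff_monom)

lemma sparse_frob:
  fixes r :: "'b::comm_semiring_1 poly"
  assumes "sparse N r"
  shows "sparse (p * N) (\<Sum>j\<le>degree r. monom (coeff r j ^ p) (p * j))"
proof (rule sparse_sum)
  fix j assume "j \<in> {..degree r}"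
  show "sparse (p * N) (monom (coeff r j ^ p) (p * j))"
  proof (cases "coeff r j = 0")
    case True
    show ?thesis
    proof (cases "p = 0")
      case True
      then show ?thesis by (simp add: sparse_def coeff_monom)
    next
      case False
      then have "coeff r j ^ p = 0" using \<open>coeff r j = 0\<close> by (simp add: power_0_left)
      then show ?thesis by simp
    qed
  next
    case False
    then have "N dvd j" using assms unfolding sparse_def by auto
    then show ?thesis by (intro sparse_monom) auto
  qed
qed

definition lin :: "(nat \<Rightarrow> 'b::comm_ring_1) \<Rightarrow> 'b poly \<Rightarrow> 'b" where
  "lin v E = (\<Sum>j\<le>degree E. coeff E j * v j)"

lemma lin_bound: "degree E \<le> N \<Longrightarrow> lin v E = (\<Sum>j\<le>N. coeff E j * v j)"
  unfolding lin_def
  by (rule sum.mono_neutral_left) (auto simp: coeff_eq_0)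

lemma lin_add: "lin v (a + b) = lin v a + lin v b"
proof -
  define N where "N = max (degree a) (degree b)"
  have "degree (a + b) \<le> N" unfolding N_def by (rule degree_add_le_max)
  then show ?thesis
    using lin_bound[of a N v] lin_bound[of b N v] lin_bound[of "a+b" N v]
    unfolding N_def by (simp add: sum.distrib algebra_simps)
qed

lemma lin_0[simp]: "lin v 0 = 0" unfolding lin_def by simp

lemma lin_sum: "lin v (\<Sum>i\<in>A. g i) = (\<Sum>i\<in>A. lin v (g i))"
  by (induction A rule: infinite_finite_induct) (auto simp: lin_add)


lemma lin_smult: "lin v (smult c a) = c * lin v a"
proof -
  have "degree (smult c a) \<le> degree a" by (rule degree_smult_le)
  then show ?thesis using lin_bound[of "smult c a" "degree a" v]
    unfolding lin_def by (simp add: sum_distrib_left algebra_simps)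
qed

lemma lin_minus: "lin v (a - b) = lin v a - lin v b"
  using lin_add[of v "a - b" b] by simp

lemma lin_monom: "lin v (monom c k) = c * v k"
proof -
  have "lin v (monom c k) = (\<Sum>j\<le>k. coeff (monom c k) j * v j)"
    by (rule lin_bound) (rule degree_monom_le)
  also have "\<dots> = (\<Sum>j\<le>k. if j = k then c * v j else 0)"
    by (rule sum.cong) (auto simp: coeff_monom)
  finally show ?thesis by simp
qed

lemma lin_pCons: "lin v (pCons a E) = a * v 0 + lin (\<lambda>j. v (Suc j)) E"
proof -
  have "lin v (pCons a E) = (\<Sum>j\<le>Suc (degree E). coeff (pCons a E) j * v j)"
    by (rule lin_bound) (simp add: degree_pCons_le)
  also have "\<dots> = a * v 0 + (\<Sum>j\<le>degree E. coeff E j * v (Suc j))"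
    by (subst sum.atMost_Suc_shift) simp
  finally show ?thesis unfolding lin_def by simp
qed

lemma lin_mult_zero:
  fixes g :: "'b::comm_ring_1 poly"
  assumes "\<And>j. (\<Sum>k\<le>degree g. coeff g k * v (j + k)) = 0"
  shows "lin v (g * E) = 0"
  using assms
proof (induction E arbitrary: v)
  case (pCons a E)
  have "g * pCons a E = smult a g + pCons 0 (g * E)" by (simp add: mult_pCons_right)
  then have "lin v (g * pCons a E) = a * lin v g + lin (\<lambda>j. v (Suc j)) (g * E)"
    by (simp add: lin_add lin_smult lin_pCons)
  moreover have "lin v g = 0" using pCons.prems[of 0] unfolding lin_def by simp
  moreover have "lin (\<lambda>j. v (Suc j)) (g * E) = 0"
    by (rule pCons.IH) (use pCons.prems[of "Suc _"] in simp)
  ultimately show ?case by simp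
qed simp



definition cong3 :: "'b::comm_ring_1 \<Rightarrow> 'b \<Rightarrow> 'b \<Rightarrow> 'b \<Rightarrow> 'b \<Rightarrow> bool" where
  "cong3 g1 g2 g3 a b \<longleftrightarrow> (\<exists>u v z. a - b = g1 * u + g2 * v + g3 * z)"

lemma cong3_refl[simp]: "cong3 g1 g2 g3 a a"
  unfolding cong3_def by (intro exI[of _ 0]) simp

lemma cong3_sym: "cong3 g1 g2 g3 a b \<Longrightarrow> cong3 g1 g2 g3 b a"
  unfolding cong3_def
  by (metis (no_types, opaque_lifting) minus_diff_eq minus_add_distrib mult_minus_right)

lemma cong3_trans: "cong3 g1 g2 g3 a b \<Longrightarrow> cong3 g1 g2 g3 b c \<Longrightarrow> cong3 g1 g2 g3 a c"
proof -
  assume "cong3 g1 g2 g3 a b" "cong3 g1 g2 g3 b c"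
  then obtain u v z u' v' z' where "a - b = g1 * u + g2 * v + g3 * z" "b - c = g1 * u' + g2 * v' + g3 * z'"
    unfolding cong3_def by blast
  then have "a - c = g1 * (u + u') + g2 * (v + v') + g3 * (z + z')" by (simp add: algebra_simps)
  then show ?thesis unfolding cong3_def by blast
qed

lemma cong3_add: "cong3 g1 g2 g3 a b \<Longrightarrow> cong3 g1 g2 g3 c e \<Longrightarrow> cong3 g1 g2 g3 (a + c) (b + e)"
proof -
  assume "cong3 g1 g2 g3 a b" "cong3 g1 g2 g3 c e"
  then obtain u v z u' v' z' where "a - b = g1 * u + g2 * v + g3 * z" "c - e = g1 * u' + g2 * v' + g3 * z'"
    unfolding cong3_def by blast
  then have "(a + c) - (b + e) = g1 * (u + u') + g2 * (v + v') + g3 * (z + z')" by (simp add: algebra_simps)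
  then show ?thesis unfolding cong3_def by blast
qed

lemma cong3_mult_left: "cong3 g1 g2 g3 a b \<Longrightarrow> cong3 g1 g2 g3 (c * a) (c * b)"
proof -
  assume "cong3 g1 g2 g3 a b"
  then obtain u v z where "a - b = g1 * u + g2 * v + g3 * z"
    unfolding cong3_def by blast
  then have "c * a - c * b = g1 * (c * u) + g2 * (c * v) + g3 * (c * z)"
    by (metis (no_types, lifting) distrib_left mult.left_commute right_diff_distrib)
  then show ?thesis unfolding cong3_def by blast
qed

lemma cong3_mult_right: "cong3 g1 g2 g3 a b \<Longrightarrow> cong3 g1 g2 g3 (a * c) (b * c)"
  using cong3_mult_left[of g1 g2 g3 a b c] by (simp add: mult.commute)

lemma cong3_mult: "cong3 g1 g2 g3 a b \<Longrightarrow> cong3 g1 g2 g3 c e \<Longrightarrow> cong3 g1 g2 g3 (a * c) (b * e)"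
  by (meson cong3_mult_left cong3_mult_right cong3_trans)

lemma cong3_power: "cong3 g1 g2 g3 a b \<Longrightarrow> cong3 g1 g2 g3 (a ^ n) (b ^ n)"
  by (induction n) (auto intro: cong3_mult)

lemma cong3_sum: "(\<And>i. i \<in> A \<Longrightarrow> cong3 g1 g2 g3 (f i) (g i)) \<Longrightarrow> cong3 g1 g2 g3 (\<Sum>i\<in>A. f i) (\<Sum>i\<in>A. g i)"
  by (induction A rule: infinite_finite_induct) (auto intro: cong3_add)

lemma cong3_gen1: "cong3 g1 g2 g3 (a + g1 * u) a"
  unfolding cong3_def by (intro exI[of _ u] exI[of _ 0]) simp
lemma cong3_gen2: "cong3 g1 g2 g3 (a + g2 * u) a"
  unfolding cong3_def by (intro exI[of _ 0] exI[of _ u]) simp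
lemma cong3_gen3: "cong3 g1 g2 g3 (a + g3 * u) a"
  unfolding cong3_def by (intro exI[of _ 0] exI[of _ 0] exI[of _ u]) simp

lemma cong3_pcong: "pcong p a b \<Longrightarrow> cong3 g1 g2 (of_nat p) a b"
  unfolding cong3_def pcong_def by (metis add_0 mult_zero_right)

lemma cong3_pcong2: "pcong p a b \<Longrightarrow> cong3 g1 (of_nat p) g3 a b"
  unfolding cong3_def pcong_def by (metis add_0 add.commute mult_zero_right)



definition Cp :: "'a::comm_ring_1 poly \<Rightarrow> 'a poly poly" where
  "Cp q = map_poly (\<lambda>c. [:c:]) q"

interpretation cpm: map_poly_comm_ring_hom "\<lambda>c::'a::comm_ring_1. [:c:]" ..

lemma Cp_add: "Cp (a + b) = Cp a + Cp b" unfolding Cp_def by (simp add: cpm.hom_add)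
lemma Cp_mult: "Cp (a * b) = Cp a * Cp b" unfolding Cp_def by (simp add: cpm.hom_mult)
lemma Cp_monom: "Cp (monom c k) = monom [:c:] k" unfolding Cp_def by simp
lemma coeff_Cp: "coeff (Cp q) k = [:coeff q k:]" unfolding Cp_def by simp
lemma degree_Cp: "degree (Cp q) = degree q" unfolding Cp_def by (rule degree_map_poly) auto

lemma poly_Cp: "poly (Cp q) [:0,1:] = q"
  by (induction q) (auto simp: Cp_def cpm.map_poly_pCons_hom)

lemma monom_as_Y: "monom (a::'b::comm_ring_1) k = [:a:] * [:0,1:] ^ k"
  by (simp add: monom_altdef)

lemma lin_const_mult: "lin v ([:a:] * E) = a * lin v E"
  by (simp add: lin_smult)

lemma lin_Cp: "lin (\<lambda>j. [:vv j:]) (Cp q) = [:lin vv q:]"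
proof -
  have "lin (\<lambda>j. [:vv j:]) (Cp q) = (\<Sum>j\<le>degree q. [:coeff q j:] * [:vv j:])"
    unfolding lin_def degree_Cp coeff_Cp ..
  also have "\<dots> = [:lin vv q:]" unfolding lin_def by (simp only: cpoly.hom_sum cpoly.hom_mult)
  finally show ?thesis .
qed

lemma lin_Cp_mult_zero:
  fixes f :: "'a::comm_ring_1 poly"
  assumes rec: "\<And>j. (\<Sum>k\<le>degree f. coeff f k * vv (j+k)) = 0"
  shows "lin (\<lambda>j. [:vv j:]) (Cp f * E) = 0"
proof (rule lin_mult_zero)
  fix j
  have "(\<Sum>k\<le>degree (Cp f). coeff (Cp f) k * [:vv (j + k):]) = [:\<Sum>k\<le>degree f. coeff f k * vv (j+k):]"
    unfolding degree_Cp coeff_Cp by (simp only: cpoly.hom_sum cpoly.hom_mult)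
  then show "(\<Sum>k\<le>degree (Cp f). coeff (Cp f) k * [:vv (j + k):]) = 0" using rec by simp
qed

lemma lin_J:
  fixes f :: "'a::comm_ring_1 poly"
  assumes rec: "\<And>j. (\<Sum>k\<le>degree f. coeff f k * vv (j+k)) = 0"
    and c: "cong3 [:f:] (Cp f) (of_nat p) a b"
  shows "cong3 f (of_nat p) 0 (lin (\<lambda>j. [:vv j:]) a) (lin (\<lambda>j. [:vv j:]) b)"
proof -
  obtain u v z where e: "a - b = [:f:] * u + Cp f * v + of_nat p * z" using c unfolding cong3_def by blast
  have op: "(of_nat p :: 'a poly poly) = [:of_nat p:]" by (simp add: of_nat_poly)
  have "lin (\<lambda>j. [:vv j:]) a - lin (\<lambda>j. [:vv j:]) b = lin (\<lambda>j. [:vv j:]) (a - b)" by (simp add: lin_minus)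
  also have "\<dots> = f * lin (\<lambda>j. [:vv j:]) u + of_nat p * lin (\<lambda>j. [:vv j:]) z"
    unfolding e lin_add op lin_const_mult lin_Cp_mult_zero[OF rec] by simp
  finally show ?thesis unfolding cong3_def by (intro exI[of _ "lin (\<lambda>j. [:vv j:]) u"] exI[of _ "lin (\<lambda>j. [:vv j:]) z"] exI[of _ 0]) simp
qed

lemma tele:
  fixes Y Xc :: "'b::comm_ring_1"
  shows "(Y - Xc) * (\<Sum>j<k. Xc^(k-1-j) * Y^j) = Y^k - Xc^k"
proof (induction k)
  case (Suc k)
  have "(\<Sum>j<Suc k. Xc^(Suc k-1-j) * Y^j) = Xc * (\<Sum>j<k. Xc^(k-1-j) * Y^j) + Y^k"
  proof -
    have "(\<Sum>j<Suc k. Xc^(Suc k-1-j) * Y^j) = (\<Sum>j<k. Xc^(k-j) * Y^j) + Y^k" by simp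
    also have "(\<Sum>j<k. Xc^(k-j) * Y^j) = (\<Sum>j<k. Xc * (Xc^(k-1-j) * Y^j))"
    proof (rule sum.cong[OF refl])
      fix j assume "j \<in> {..<k}"
      then have "k - j = Suc (k - 1 - j)" by auto
      then show "Xc^(k-j) * Y^j = Xc * (Xc^(k-1-j) * Y^j)" by simp
    qed
    finally show ?thesis by (simp add: sum_distrib_left)
  qed
  define S where "S = (\<Sum>j<k. Xc^(k-1-j) * Y^j)"
  have "(Y - Xc) * (Xc * S + Y^k) = Xc * ((Y - Xc) * S) + (Y - Xc) * Y^k" by (simp add: algebra_simps)
  also have "\<dots> = Xc * (Y^k - Xc^k) + (Y - Xc) * Y^k" using Suc.IH unfolding S_def by simp
  also have "\<dots> = Y^Suc k - Xc^Suc k" by (simp add: algebra_simps)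
  finally show ?case using \<open>(\<Sum>j<Suc k. _) = _\<close> unfolding S_def by simp
qed simp

lemma poly_tele: "poly (\<Sum>j<k. [:[:0,1:]:]^(k-1-j) * [:0,1:]^j) [:0,1::'a::comm_ring_1:] = monom (of_nat k) (k - 1)"
proof -
  have "poly (\<Sum>j<k. [:[:0,1:]:]^(k-1-j) * [:0,1:]^j) [:0,1::'a:] = (\<Sum>j<k. [:0,1::'a:]^(k-1-j) * [:0,1:]^j)"
    by (simp add: poly_sum)
  also have "\<dots> = (\<Sum>j<k. monom (1::'a) (k - 1))"
  proof (rule sum.cong[OF refl])
    fix j assume "j \<in> {..<k}"
    then have "k - 1 - j + j = k - 1" by auto
    then show "[:0,1::'a:]^(k-1-j) * [:0,1:]^j = monom 1 (k-1)"
      by (metis monom_altdef power_add smult_1_left)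
  qed
  also have "\<dots> = monom (of_nat k) (k - 1)" by (simp add: smult_monom of_nat_poly)
  finally show ?thesis .
qed

lemma Kpoly_sum_monoms: "[:f:] = (\<Sum>k\<le>degree f. [:[:coeff f k:]:] * [:[:0,1::'a::comm_ring_1:]:]^k)"
proof -
  have "[:f:] = [:\<Sum>k\<le>degree f. monom (coeff f k) k:]" by (simp add: poly_as_sum_of_monoms)
  also have "\<dots> = (\<Sum>k\<le>degree f. [:monom (coeff f k) k:])" by (simp add: cpoly.hom_sum)
  also have "\<dots> = (\<Sum>k\<le>degree f. [:[:coeff f k:]:] * [:[:0,1::'a::comm_ring_1:]:]^k)"
    by (rule sum.cong[OF refl]) (subst monom_as_Y, simp only: cpoly.hom_mult cpoly.hom_power)
  finally show ?thesis .
qed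

lemma Cp_sum_monoms: "Cp f = (\<Sum>k\<le>degree f. [:[:coeff f k:]:] * [:0,1::'a::comm_ring_1 poly:]^k)"
proof -
  have "Cp f = Cp (\<Sum>k\<le>degree f. monom (coeff f k) k)" by (simp add: poly_as_sum_of_monoms)
  also have "\<dots> = (\<Sum>k\<le>degree f. Cp (monom (coeff f k) k))" unfolding Cp_def by (simp add: cpm.hom_sum)
  also have "\<dots> = (\<Sum>k\<le>degree f. [:[:coeff f k:]:] * [:0,1::'a::comm_ring_1 poly:]^k)"
    by (rule sum.cong[OF refl]) (simp only: Cp_monom, rule monom_as_Y)
  finally show ?thesis .
qed

lemma formal_deriv_as_sum:
  fixes f :: "'a::comm_ring_1 poly"
  shows "(\<Sum>k\<le>degree f. [:coeff f k:] * monom (of_nat k) (k - 1)) = formal_deriv f"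
proof (rule poly_eqI)
  fix n
  have "coeff (\<Sum>k\<le>degree f. [:coeff f k:] * monom (of_nat k) (k - 1)) n =
      (\<Sum>k\<le>degree f. coeff f k * (if k - 1 = n then of_nat k else 0))"
    by (simp add: coeff_sum)
  also have "\<dots> = (\<Sum>k\<le>degree f. if k = Suc n then coeff f k * of_nat k else 0)"
  proof (rule sum.cong[OF refl])
    fix k show "coeff f k * (if k - 1 = n then of_nat k else 0) = (if k = Suc n then coeff f k * of_nat k else 0)"
      by (cases k) auto
  qed
  also have "\<dots> = (if Suc n \<le> degree f then coeff f (Suc n) * of_nat (Suc n) else 0)"
    by (simp add: sum.delta')
  also have "\<dots> = coeff (formal_deriv f) n"
    by (auto simp: coeff_formal_deriv coeff_eq_0 mult.commute)
  finally show "coeff (\<Sum>k\<le>degree f. [:coeff f k:] * monom (of_nat k) (k - 1)) n = coeff (formal_deriv f) n" .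
qed

lemma aux_ring1: "(a::'b::comm_ring_1) * (c - b) = 0 + b * (- a) + c * a"
  by (simp add: algebra_simps)

lemma aux_ring2: "(1 + a * b) * (e::'b::comm_ring_1) = e + a * (b * e)"
  by (simp add: algebra_simps)

lemma aux_ring3: "((b::'b::comm_ring_1) * (1 + f * t)) * Q = b * Q + f * (b * t * Q)"
  by (simp add: algebra_simps)

lemma Cp_monom1: "Cp (monom 1 m) = [:0,1:]^m"
proof -
  have "Cp (monom 1 m) = Cp ([:0,1:]^m)" by (simp add: monom_altdef)
  also have "\<dots> = (Cp [:0,1:])^m" unfolding Cp_def by (rule cpm.hom_power)
  also have "Cp [:0,1:] = [:0,1:]" unfolding Cp_def by simp
  finally show ?thesis .
qed

lemma frob_step:
  fixes f w t b :: "'a::comm_ring_1 poly" and vv :: "nat \<Rightarrow> 'a"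
  assumes monic: "lead_coeff f = 1" and d1: "degree f \<ge> 1"
    and bez: "formal_deriv f * w = 1 + f * t" and pp: "prime p"
    and rec: "\<And>j. (\<Sum>k\<le>degree f. coeff f k * vv (j+k)) = 0"
    and init: "\<And>j. j < degree f \<Longrightarrow> vv j = (if j = degree f - 1 then 1 else 0)"
  shows "\<exists>(n::nat) c \<alpha>. cong3 f (of_nat p) 0 b (\<Sum>j<n. smult (c j) (\<alpha> j ^ p))"
proof -
  define d where "d = degree f"
  define Y :: "'a poly poly" where "Y = [:0,1:]"
  define Xc :: "'a poly poly" where "Xc = [:[:0,1:]:]"
  define T where "T k = (\<Sum>j<k. Xc^(k-1-j) * Y^j)" for k
  define Q where "Q = (\<Sum>k\<le>d. [:[:coeff f k:]:] * T k)"
  define L where "L = lin (\<lambda>j. [:vv j:])"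
  define cJ where "cJ = cong3 [:f:] (Cp f) (of_nat p :: 'a poly poly)"
  have tel: "(Y - Xc) * T k = Y^k - Xc^k" for k unfolding T_def by (rule tele)
  have CfKf: "Cp f - [:f:] = (Y - Xc) * Q"
  proof -
    have "(Y - Xc) * Q = (\<Sum>k\<le>d. [:[:coeff f k:]:] * (Y^k - Xc^k))"
      unfolding Q_def sum_distrib_left by (rule sum.cong[OF refl]) (simp only: mult.left_commute[of "Y - Xc"] tel)
    also have "\<dots> = (\<Sum>k\<le>d. [:[:coeff f k:]:] * Y^k) - (\<Sum>k\<le>d. [:[:coeff f k:]:] * Xc^k)"
      by (simp add: right_diff_distrib sum_subtractf)
    also have "\<dots> = Cp f - [:f:]"
      unfolding d_def Y_def Xc_def by (simp only: Cp_sum_monoms[symmetric] Kpoly_sum_monoms[symmetric])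
    finally show ?thesis by simp
  qed
  have sQ: "poly Q [:0,1:] = formal_deriv f"
  proof -
    have pT: "poly (T k) [:0,1:] = monom (of_nat k) (k-1)" for k
      unfolding T_def Y_def Xc_def by (rule poly_tele)
    have "poly Q [:0,1:] = (\<Sum>k\<le>d. [:coeff f k:] * poly (T k) [:0,1:])"
      unfolding Q_def poly_sum by simp
    also have "\<dots> = (\<Sum>k\<le>d. [:coeff f k:] * monom (of_nat k) (k - 1))"
      unfolding pT ..
    finally have "poly Q [:0,1:] = (\<Sum>k\<le>d. [:coeff f k:] * monom (of_nat k) (k - 1))" .
    then show ?thesis unfolding d_def using formal_deriv_as_sum by metis
  qed
  have LT: "L (T k) = (if k = d then 1 else 0)" if "k \<le> d" for k
  proof -
    have "L (T k) = (\<Sum>j<k. [:0,1:]^(k-1-j) * [:vv j:])"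
      unfolding L_def T_def lin_sum
    proof (rule sum.cong[OF refl])
      fix j
      have "Xc^(k-1-j) * Y^j = monom ([:0,1:]^(k-1-j)) j"
        unfolding Xc_def Y_def by (simp add: monom_as_Y cpoly.hom_power)
      then show "lin (\<lambda>j. [:vv j:]) (Xc ^ (k - 1 - j) * Y ^ j) = [:0, 1:] ^ (k - 1 - j) * [:vv j:]"
        by (simp add: lin_monom)
    qed
    also have "\<dots> = (\<Sum>j<k. if j = d - 1 then [:0,1:]^(k-1-j) else 0)"
    proof (rule sum.cong[OF refl])
      fix j assume "j \<in> {..<k}"
      then have "j < d" using that by auto
      then show "[:0,1:]^(k-1-j) * [:vv j:] = (if j = d - 1 then [:0,1:]^(k-1-j) else 0)"
        using init[of j] unfolding d_def by auto
    qed
    also have "\<dots> = (if k = d then 1 else 0)"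
      using that d1 unfolding d_def by (auto simp: sum.delta')
    finally show ?thesis .
  qed
  have LQ: "L Q = 1"
  proof -
    have "L Q = (\<Sum>k\<le>d. [:coeff f k:] * L (T k))"
      unfolding Q_def L_def lin_sum by (simp add: lin_smult)
    also have "\<dots> = (\<Sum>k\<le>d. if k = d then [:coeff f k:] else 0)"
    proof (rule sum.cong[OF refl])
      fix k assume "k \<in> {..d}"
      then have "k \<le> d" by simp
      then show "[:coeff f k:] * L (T k) = (if k = d then [:coeff f k:] else 0)"
        using LT[of k] by (cases "k = d") simp_all
    qed
    also have "\<dots> = [:coeff f d:]" by simp
    also have "\<dots> = 1" using monic unfolding d_def by simp
    finally show ?thesis .
  qed
  define e where "e = [:w:] * Q"
  have gen1: "cJ (a + [:f:] * u) a" for a u unfolding cJ_def by (rule cong3_gen1)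
  have Ye: "cJ ((Y - Xc) * e) 0"
  proof -
    have "(Y - Xc) * e = 0 + [:f:] * (- [:w:]) + Cp f * [:w:]"
    proof -
      have "(Y - Xc) * e = [:w:] * ((Y - Xc) * Q)" unfolding e_def by (simp only: ac_simps)
      also have "\<dots> = [:w:] * (Cp f - [:f:])" by (simp only: CfKf)
      also have "\<dots> = 0 + [:f:] * (- [:w:]) + Cp f * [:w:]" by (rule aux_ring1)
      finally show ?thesis .
    qed
    then show ?thesis unfolding cJ_def cong3_def by (intro exI[of _ "- [:w:]"] exI[of _ "[:w:]"] exI[of _ 0]) simp
  qed
  have sig: "cJ (h * e) ([:poly h [:0,1:]:] * e)" for h
  proof -
    have "poly (h - [:poly h [:0,1:]:]) [:0,1:] = 0" by simp
    then have "[:- [:0,1:], 1:] dvd (h - [:poly h [:0,1:]:])" using poly_eq_0_iff_dvd by blast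
    moreover have "[:- [:0,1:], 1:] = Y - Xc" unfolding Y_def Xc_def by simp
    ultimately obtain k where k: "h - [:poly h [:0,1:]:] = (Y - Xc) * k" by (auto elim: dvdE)
    have "cJ (k * ((Y - Xc) * e)) (k * 0)" using Ye unfolding cJ_def by (rule cong3_mult_left)
    moreover have "k * ((Y - Xc) * e) = (h - [:poly h [:0,1:]:]) * e" unfolding k by (simp only: ac_simps)
    ultimately have A: "cJ ((h - [:poly h [:0,1:]:]) * e) 0" by simp
    have "cJ ((h - [:poly h [:0,1:]:]) * e + [:poly h [:0,1:]:] * e) (0 + [:poly h [:0,1:]:] * e)"
      using A unfolding cJ_def by (rule cong3_add) simp
    then show ?thesis by (simp add: left_diff_distrib)
  qed
  have se: "poly e [:0,1:] = 1 + f * t" unfolding e_def using sQ bez by (simp add: mult.commute)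
  have ee: "cJ (e * e) e"
  proof -
    have 1: "cJ (e * e) ([:1 + f * t:] * e)" using sig[of e] se by simp
    have "[:1 + f * t:] * e = (1 + [:f:] * [:t:]) * e"
      by (simp only: cpoly.hom_add cpoly.hom_mult cpoly.hom_one)
    also have "\<dots> = e + [:f:] * ([:t:] * e)" by (rule aux_ring2)
    finally have eq: "[:1 + f * t:] * e = e + [:f:] * ([:t:] * e)" .
    have 2: "cJ ([:1 + f * t:] * e) e" unfolding eq by (rule gen1)
    show ?thesis using 1 2 unfolding cJ_def by (rule cong3_trans)
  qed
  have epow: "cJ (e ^ Suc n) e" for n
  proof (induction n)
    case (Suc n)
    have "cJ (e * e ^ Suc n) (e * e)" using Suc unfolding cJ_def by (rule cong3_mult_left)
    then have "cJ (e ^ Suc (Suc n)) (e * e)" by simp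
    then show ?case using ee unfolding cJ_def by (rule cong3_trans)
  qed (simp add: cJ_def)
  define \<alpha> where "\<alpha> j = coeff e j" for j
  have frob: "cJ (e ^ p) (\<Sum>j\<le>degree e. monom (\<alpha> j ^ p) (p * j))"
    unfolding cJ_def \<alpha>_def by (rule cong3_pcong[OF freshman_poly[OF pp]])
  define g where "g = Cp (b * formal_deriv f)"
  have p0: "p = Suc (p - 1)" using pp prime_gt_0_nat by auto
  have c1: "cJ (g * e) ([:b:] * Q)"
  proof -
    have 1: "cJ (g * e) ([:b * formal_deriv f:] * e)" using sig[of g] unfolding g_def poly_Cp .
    have hb: "[:formal_deriv f:] * [:w:] = 1 + [:f:] * [:t:]"
    proof -
      have "[:formal_deriv f * w:] = [:1 + f * t:]" using bez by simp
      then show ?thesis by (simp only: cpoly.hom_mult cpoly.hom_add cpoly.hom_one)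
    qed
    have "[:b * formal_deriv f:] * e = ([:b:] * ([:formal_deriv f:] * [:w:])) * Q"
      unfolding e_def cpoly.hom_mult by (simp only: ac_simps)
    also have "\<dots> = ([:b:] * (1 + [:f:] * [:t:])) * Q" unfolding hb ..
    also have "\<dots> = [:b:] * Q + [:f:] * ([:b:] * [:t:] * Q)" by (rule aux_ring3)
    also have "\<dots> = [:b:] * Q + [:f:] * ([:b * t:] * Q)" by (simp only: cpoly.hom_mult)
    finally have eq2: "[:b * formal_deriv f:] * e = [:b:] * Q + [:f:] * ([:b * t:] * Q)" .
    have 2: "cJ ([:b * formal_deriv f:] * e) ([:b:] * Q)" unfolding eq2 by (rule gen1)
    show ?thesis using 1 2 unfolding cJ_def by (rule cong3_trans)
  qed
  have c2: "cJ (g * e) (\<Sum>j\<le>degree e. [:\<alpha> j ^ p:] * Cp (b * formal_deriv f * monom 1 (p * j)))"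
  proof -
    have "cJ (e ^ p) e" using epow[of "p - 1"] p0 by simp
    then have "cJ (g * e ^ p) (g * e)" unfolding cJ_def by (rule cong3_mult_left)
    then have "cJ (g * e) (g * e ^ p)" unfolding cJ_def by (rule cong3_sym)
    moreover have "cJ (g * e ^ p) (g * (\<Sum>j\<le>degree e. monom (\<alpha> j ^ p) (p * j)))"
      using frob unfolding cJ_def by (rule cong3_mult_left)
    moreover have "g * (\<Sum>j\<le>degree e. monom (\<alpha> j ^ p) (p * j)) =
        (\<Sum>j\<le>degree e. [:\<alpha> j ^ p:] * Cp (b * formal_deriv f * monom 1 (p * j)))"
      unfolding sum_distrib_left
    proof (rule sum.cong[OF refl])
      fix j
      have "Cp (b * formal_deriv f * monom 1 (p * j)) = g * [:0,1:]^(p*j)"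
        unfolding g_def Cp_mult Cp_monom1 ..
      moreover have "monom (\<alpha> j ^ p) (p * j) = [:\<alpha> j ^ p:] * [:0,1:]^(p*j)" by (rule monom_as_Y)
      ultimately show "g * monom (\<alpha> j ^ p) (p * j) = [:\<alpha> j ^ p:] * Cp (b * formal_deriv f * monom 1 (p * j))"
        by (simp only: ac_simps)
    qed
    ultimately show ?thesis unfolding cJ_def by (auto elim: cong3_trans)
  qed
  have "cJ ([:b:] * Q) (\<Sum>j\<le>degree e. [:\<alpha> j ^ p:] * Cp (b * formal_deriv f * monom 1 (p * j)))"
    using cong3_trans[OF cong3_sym[OF c1[unfolded cJ_def]] c2[unfolded cJ_def]] unfolding cJ_def .
  then have H: "cong3 f (of_nat p) 0 (L ([:b:] * Q)) (L (\<Sum>j\<le>degree e. [:\<alpha> j ^ p:] * Cp (b * formal_deriv f * monom 1 (p * j))))"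
    unfolding cJ_def L_def by (rule lin_J[OF rec])
  moreover have E1: "L ([:b:] * Q) = b" unfolding L_def lin_const_mult using LQ unfolding L_def by simp
  moreover have E2: "L (\<Sum>j\<le>degree e. [:\<alpha> j ^ p:] * Cp (b * formal_deriv f * monom 1 (p * j))) =
     (\<Sum>j<Suc (degree e). smult (lin vv (b * formal_deriv f * monom 1 (p * j))) (\<alpha> j ^ p))"
    unfolding L_def lin_sum lin_const_mult lin_Cp lessThan_Suc_atMost by (simp add: mult.commute)
  have "cong3 f (of_nat p) 0 b (\<Sum>j<Suc (degree e). smult (lin vv (b * formal_deriv f * monom 1 (p * j))) (\<alpha> j ^ p))"
    using H unfolding E1 E2 .
  note fin = this
  show ?thesis
    apply (rule exI[of _ "Suc (degree e)"])
    apply (rule exI[of _ "\<lambda>j. lin vv (b * formal_deriv f * monom 1 (p * j))"])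
    apply (rule exI[of _ \<alpha>])
    using fin by simp
qed



lemma smult_as_const_mult: "smult c a = [:c:] * a" by simp

lemma frob_all:
  fixes f w t :: "'a::comm_ring_1 poly" and vv :: "nat \<Rightarrow> 'a"
  assumes monic: "lead_coeff f = 1" and d1: "degree f \<ge> 1"
    and bez: "formal_deriv f * w = 1 + f * t" and pp: "prime p"
    and rec: "\<And>j. (\<Sum>k\<le>degree f. coeff f k * vv (j+k)) = 0"
    and init: "\<And>j. j < degree f \<Longrightarrow> vv j = (if j = degree f - 1 then 1 else 0)"
  shows "\<exists>r. sparse (p^s) r \<and> cong3 f (of_nat p) 0 b r"
proof (induction s arbitrary: b)
  case 0
  show ?case by (intro exI[of _ b]) (simp add: sparse_def)
next
  case (Suc s)
  obtain n :: nat and c \<alpha> where H: "cong3 f (of_nat p) 0 b (\<Sum>j<n. smult (c j) (\<alpha> j ^ p))"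
    using frob_step[OF monic d1 bez pp rec init] by blast
  have "\<forall>j. \<exists>r. sparse (p^s) r \<and> cong3 f (of_nat p) 0 (\<alpha> j) r" using Suc by blast
  then obtain R where R: "\<And>j. sparse (p^s) (R j) \<and> cong3 f (of_nat p) 0 (\<alpha> j) (R j)" by metis
  define R' where "R' j = (\<Sum>i\<le>degree (R j). monom (coeff (R j) i ^ p) (p * i))" for j
  have sp: "sparse (p ^ Suc s) (R' j)" for j
    unfolding R'_def power_Suc using R[of j] sparse_frob by blast
  have cj: "cong3 f (of_nat p) 0 (\<alpha> j ^ p) (R' j)" for j
  proof -
    have "cong3 f (of_nat p) 0 (\<alpha> j ^ p) (R j ^ p)" using R[of j] by (intro cong3_power) simp
    moreover have "cong3 f (of_nat p) 0 (R j ^ p) (R' j)"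
      unfolding R'_def by (rule cong3_pcong2[OF freshman_poly[OF pp]])
    ultimately show ?thesis by (rule cong3_trans)
  qed
  have "cong3 f (of_nat p) 0 (\<Sum>j<n. smult (c j) (\<alpha> j ^ p)) (\<Sum>j<n. smult (c j) (R' j))"
  proof (rule cong3_sum)
    fix j
    show "cong3 f (of_nat p) 0 (smult (c j) (\<alpha> j ^ p)) (smult (c j) (R' j))"
      unfolding smult_as_const_mult by (rule cong3_mult_left[OF cj])
  qed
  then have "cong3 f (of_nat p) 0 b (\<Sum>j<n. smult (c j) (R' j))" using H cong3_trans by blast
  moreover have "sparse (p ^ Suc s) (\<Sum>j<n. smult (c j) (R' j))"
    by (intro sparse_sum sparse_smult sp)
  ultimately show ?case by blast
qed

lemma of_nat_poly_mult: "(of_nat n :: 'a::comm_ring_1 poly) * v = smult (of_nat n) v"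
  by (simp add: of_nat_poly)

lemma aux_ring4: "(v::'b::comm_ring_1) - r = a + b + 0 * z \<Longrightarrow> v = r + a + b"
  by (simp add: algebra_simps)

lemma lift:
  fixes f :: "'a::comm_ring_1 poly"
  assumes H: "\<And>b. \<exists>r. sparse N r \<and> cong3 f (of_nat p) 0 b r"
  shows "\<exists>r u v. sparse N r \<and> b = r + f * u + smult (of_nat p ^ k) v"
proof (induction k arbitrary: b)
  case 0
  show ?case by (intro exI[of _ 0] exI[of _ 0] exI[of _ b]) simp
next
  case (Suc k)
  obtain r u v where 1: "sparse N r" "b = r + f * u + smult (of_nat p ^ k) v" using Suc by blast
  obtain r' where 2: "sparse N r'" "cong3 f (of_nat p) 0 v r'" using H by blast
  obtain u' v' z' where 3: "v - r' = f * u' + of_nat p * v' + 0 * z'" using 2 unfolding cong3_def by blast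
  have "v = r' + f * u' + of_nat p * v'" using aux_ring4[OF 3] .
  then have "v = r' + f * u' + smult (of_nat p) v'" unfolding of_nat_poly_mult .
  then have "b = (r + smult (of_nat p ^ k) r') + f * (u + smult (of_nat p ^ k) u') + smult (of_nat p ^ Suc k) v'"
    using 1 by (simp add: algebra_simps smult_add_right)
  moreover have "sparse N (r + smult (of_nat p ^ k) r')" using 1 2 by (intro sparse_add sparse_smult)
  ultimately show ?case by blast
qed

lemma lin_sparse_dvd:
  fixes u :: "nat \<Rightarrow> 'a::comm_ring_1"
  assumes sp: "sparse N r" and dv: "\<And>n. N dvd n \<Longrightarrow> c dvd u n"
  shows "c dvd lin u r"
  unfolding lin_def
proof (rule dvd_sum)
  fix j
  show "c dvd coeff r j * u j"
  proof (cases "coeff r j = 0")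
    case False
    then have "N dvd j" using sp unfolding sparse_def by auto
    then show ?thesis using dv by (simp add: dvd_mult)
  qed simp
qed

lemma padic_zero:
  fixes f w t :: "'a::comm_ring_1 poly" and vv u :: "nat \<Rightarrow> 'a"
  assumes monic: "lead_coeff f = 1" and d1: "degree f \<ge> 1"
    and bez: "formal_deriv f * w = 1 + f * t" and pp: "prime p"
    and rec: "\<And>j. (\<Sum>k\<le>degree f. coeff f k * vv (j+k)) = 0"
    and init: "\<And>j. j < degree f \<Longrightarrow> vv j = (if j = degree f - 1 then 1 else 0)"
    and sep: "p_adically_separated p TYPE('a)"
    and urec: "\<And>j. (\<Sum>k\<le>degree f. coeff f k * u (j+k)) = 0"
    and u0: "u 0 = 0"
    and udvd: "\<And>n. n \<ge> 1 \<Longrightarrow> of_nat n dvd u n"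
  shows "u n = 0"
proof -
  have "of_nat p ^ s dvd u n" for s
  proof -
    have "\<And>b. \<exists>r. sparse (p^s) r \<and> cong3 f (of_nat p) 0 b r"
      using frob_all[OF monic d1 bez pp rec init] by blast
    from lift[OF this, of "monom 1 n" s] obtain r uu v where
      1: "sparse (p^s) r" "monom 1 n = r + f * uu + smult (of_nat p ^ s) v" by blast
    have "lin u (monom 1 n) = lin u r + lin u (f * uu) + of_nat p ^ s * lin u v"
      unfolding 1(2) lin_add lin_smult ..
    moreover have "lin u (f * uu) = 0" by (rule lin_mult_zero) (rule urec)
    moreover have "of_nat p ^ s dvd lin u r"
    proof (rule lin_sparse_dvd[OF 1(1)])
      fix m assume "p ^ s dvd m"
      then obtain q where q: "m = p ^ s * q" by blast
      show "of_nat p ^ s dvd u m"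
      proof (cases "m = 0")
        case True
        then show ?thesis using u0 by simp
      next
        case False
        then have "of_nat m dvd u m" using udvd by simp
        moreover have "(of_nat p ^ s :: 'a) dvd of_nat m" unfolding q by simp
        ultimately show ?thesis using dvd_trans by blast
      qed
    qed
    ultimately have "of_nat p ^ s dvd lin u (monom 1 n)" by simp
    then show ?thesis by (simp add: lin_monom)
  qed
  then show ?thesis using sep unfolding p_adically_separated_def by blast
qed



interpretation flsc: comm_ring_hom "fls_const :: 'a::comm_ring_1 \<Rightarrow> 'a fls"
  by unfold_locales (simp_all add: fls_plus_const[symmetric])

interpretation flsm: map_poly_comm_ring_hom "fls_const :: 'a::comm_ring_1 \<Rightarrow> 'a fls" ..

definition iota :: "'a::comm_ring_1 poly \<Rightarrow> 'a fls" where
  "iota q = poly (map_poly fls_const q) fls_X_inv"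

lemma iota_add: "iota (a + b) = iota a + iota b"
  unfolding iota_def by (simp add: flsm.hom_add)
lemma iota_mult: "iota (a * b) = iota a * iota b"
  unfolding iota_def by (simp add: flsm.hom_mult)
lemma iota_diff: "iota (a - b) = iota a - iota b"
  unfolding iota_def by (simp add: flsm.hom_minus)
lemma map_poly_fls_pCons: "map_poly (fls_const :: 'a::comm_ring_1 \<Rightarrow> 'a fls) (pCons c q) = pCons (fls_const c) (map_poly fls_const q)"
  by (cases "c = 0 \<and> q = 0") (auto simp: map_poly_pCons)

lemma iota_const: "iota [:c:] = fls_const c"
  unfolding iota_def by (simp add: map_poly_fls_pCons)
lemma iota_0[simp]: "iota 0 = 0" unfolding iota_def by simp
lemma iota_1[simp]: "iota 1 = 1" unfolding iota_def by simp
lemma iota_pCons: "iota (pCons a q) = fls_const a + fls_X_inv * iota q"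
  unfolding iota_def by (simp add: map_poly_fls_pCons)
lemma iota_smult: "iota (smult c q) = fls_const c * iota q"
  using iota_mult[of "[:c:]" q] by (simp add: iota_const)
lemma iota_sum: "iota (\<Sum>i\<in>A. g i) = (\<Sum>i\<in>A. iota (g i))"
  by (induction A rule: infinite_finite_induct) (auto simp: iota_add)
lemma iota_x: "iota [:0,1:] = fls_X_inv"
  unfolding iota_def by (simp add: map_poly_fls_pCons)
lemma iota_monom1: "iota (monom 1 k) = fls_X_inv ^ k"
proof -
  have "monom (1::'a) k = [:0,1:]^k" by (simp add: monom_altdef)
  then show ?thesis unfolding iota_def by (simp add: flsm.hom_power)
qed
lemma iota_monom: "iota (monom c k) = fls_const c * fls_X_inv ^ k"
proof -
  have "monom c k = smult c (monom 1 k)" by (simp add: smult_monom)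
  then show ?thesis by (simp add: iota_smult iota_monom1)
qed

lemma X_inv_mult_nth: "fls_nth (fls_X_inv * (G::'a::comm_ring_1 fls)) n = fls_nth G (n + 1)"
  by (simp add: fls_X_inv_times_conv_shift)

lemma iota_nth_pos: "n > 0 \<Longrightarrow> fls_nth (iota q) n = 0"
proof (induction q arbitrary: n)
  case (pCons a q)
  then show ?case by (simp add: iota_pCons X_inv_mult_nth)
qed simp

lemma X_X_inv: "fls_X * fls_X_inv = (1 :: 'a::comm_ring_1 fls)"
  by (simp add: fls_X_inv_times_conv_shift fls_X_conv_shift_1)

lemma X_pow_X_inv_pow: "k \<le> N \<Longrightarrow> fls_X_inv ^ k * fls_X ^ N = (fls_X ^ (N - k) :: 'a::comm_ring_1 fls)"
proof -
  assume "k \<le> N"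
  then have "fls_X ^ N = fls_X ^ k * (fls_X ^ (N - k) :: 'a fls)" by (simp add: power_add[symmetric])
  then have "fls_X_inv ^ k * fls_X ^ N = (fls_X * fls_X_inv) ^ k * (fls_X ^ (N - k) :: 'a fls)"
    by (simp add: power_mult_distrib algebra_simps)
  then show ?thesis by (simp add: X_X_inv)
qed

definition Dx :: "'a::comm_ring_1 fls \<Rightarrow> 'a fls" where
  "Dx G = - (fls_X ^ 2 * fls_deriv G)"

lemma Dx_add: "Dx (a + b) = Dx a + Dx b" unfolding Dx_def by (simp add: algebra_simps)
lemma Dx_diff: "Dx (a - b) = Dx a - Dx b" unfolding Dx_def by (simp add: algebra_simps)
lemma Dx_mult: "Dx (a * b) = Dx a * b + a * Dx b" unfolding Dx_def by (simp add: algebra_simps)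
lemma Dx_const: "Dx (fls_const c) = 0" unfolding Dx_def by simp
lemma Dx_const_mult: "Dx (fls_const c * a) = fls_const c * Dx a" by (simp add: Dx_mult Dx_const)
lemma Dx_of_nat_mult: "Dx (of_nat c * a) = of_nat c * Dx a" unfolding Dx_def by (simp add: algebra_simps)
lemma Dx_0[simp]: "Dx 0 = 0" unfolding Dx_def by simp
lemma Dx_sum: "Dx (\<Sum>i\<in>A. g i) = (\<Sum>i\<in>A. Dx (g i))"
  by (induction A rule: infinite_finite_induct) (auto simp: Dx_add)
lemma Dx_X_inv: "Dx fls_X_inv = 1"
proof -
  have "Dx fls_X_inv = (fls_X * fls_X_inv) ^ 2" unfolding Dx_def by (simp add: power_mult_distrib)
  then show ?thesis by (simp add: X_X_inv)
qed

lemma Dx_iota: "Dx (iota q) = iota (formal_deriv q)"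
proof (induction q)
  case (pCons a q)
  have "Dx (iota (pCons a q)) = iota q + fls_X_inv * iota (formal_deriv q)"
    unfolding iota_pCons Dx_add Dx_const Dx_mult Dx_X_inv pCons.IH by simp
  also have "\<dots> = iota (formal_deriv (pCons a q))"
    unfolding formal_deriv_pCons iota_add iota_pCons by simp
  finally show ?case .
qed (simp add: formal_deriv_def)

lemma Dx_power: "Dx (a ^ Suc n) = of_nat (Suc n) * a ^ n * Dx a"
proof (induction n)
  case (Suc n)
  have "Dx (a ^ Suc (Suc n)) = Dx a * a ^ Suc n + a * Dx (a ^ Suc n)" by (simp add: Dx_mult)
  also have "\<dots> = of_nat (Suc (Suc n)) * a ^ Suc n * Dx a" unfolding Suc by (simp add: algebra_simps)
  finally show ?case .
qed simp

lemma fps_to_fls_d_form: "fps_to_fls (d_form G) = Dx (fps_to_fls G)"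
  unfolding d_form_def Dx_def by (simp add: fls_times_fps_to_fls fps_to_fls_power fls_deriv_fps_to_fls)

definition Wf :: "'a::comm_ring_1 poly \<Rightarrow> 'a fls" where
  "Wf f = fls_X ^ degree f * fps_to_fls (rev_inv f)"

lemma iota_nth: "fls_nth (iota q) m = (if m \<le> 0 then coeff q (nat (-m)) else 0)"
proof (induction q arbitrary: m)
  case (pCons a q)
  have "fls_nth (iota (pCons a q)) m = (if m = 0 then a else 0) + fls_nth (iota q) (m + 1)"
    by (simp add: iota_pCons X_inv_mult_nth)
  also have "\<dots> = (if m \<le> 0 then coeff (pCons a q) (nat (-m)) else 0)"
  proof (cases "m = 0")
    case True
    then show ?thesis using pCons by simp
  next
    case False
    then show ?thesis
    proof (cases "m < 0")
      case True
      then have "nat (-m) = Suc (nat (- (m + 1)))" by simp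
      then show ?thesis using pCons True by (simp add: coeff_pCons)
    next
      case False
      then show ?thesis using pCons \<open>m \<noteq> 0\<close> by simp
    qed
  qed
  finally show ?case .
qed simp

lemma Fr_to_fls: "fps_to_fls (fps_of_poly (reflect_poly f)) = fls_X ^ degree f * iota f"
proof (rule fls_eqI)
  fix n :: int
  have "fls_nth (fls_X ^ degree f * iota f) n = fls_nth (iota f) (n - int (degree f))"
    by (simp add: fls_X_power_conv_shift_1 fls_shifted_times_simps)
  also have "\<dots> = fls_nth (fps_to_fls (fps_of_poly (reflect_poly f))) n"
  proof (cases "n < 0")
    case True
    then have "coeff f (nat (int (degree f) - n)) = 0" by (intro coeff_eq_0) auto
    then show ?thesis using True by (simp add: iota_nth)
  next
    case False
    then obtain m where m: "n = int m" by (metis nonneg_int_cases not_less)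
    show ?thesis
    proof (cases "m \<le> degree f")
      case True
      then have "nat (int (degree f) - n) = degree f - m" using m by simp
      then show ?thesis using True m by (simp add: iota_nth coeff_reflect_poly)
    next
      case False
      then show ?thesis using m by (simp add: iota_nth coeff_reflect_poly)
    qed
  qed
  finally show "fls_nth (fps_to_fls (fps_of_poly (reflect_poly f))) n = fls_nth (fls_X ^ degree f * iota f) n" ..
qed

lemma Fr_rev_inv:
  fixes f :: "'a::comm_ring_1 poly"
  assumes "lead_coeff f = 1"
  shows "fps_of_poly (reflect_poly f) * rev_inv f = 1"
  unfolding rev_inv_def by (rule fps_right_inverse) (simp add: assms)

lemma iota_W:
  fixes f :: "'a::comm_ring_1 poly"
  assumes "lead_coeff f = 1"
  shows "iota f * Wf f = 1"
proof -
  have "iota f * Wf f = fps_to_fls (fps_of_poly (reflect_poly f)) * fps_to_fls (rev_inv f)"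
    unfolding Wf_def Fr_to_fls by (simp add: algebra_simps)
  also have "\<dots> = 1" unfolding fls_times_fps_to_fls[symmetric] Fr_rev_inv[OF assms] by simp
  finally show ?thesis .
qed

lemma Dx_W:
  fixes f :: "'a::comm_ring_1 poly"
  assumes "lead_coeff f = 1"
  shows "Dx (Wf f) = - (Wf f ^ 2 * iota (formal_deriv f))"
proof -
  have "Dx (iota f * Wf f) = 0" unfolding iota_W[OF assms] using Dx_const[of 1] by simp
  then have "iota (formal_deriv f) * Wf f + iota f * Dx (Wf f) = 0" by (simp add: Dx_mult Dx_iota)
  then have "Wf f * (iota (formal_deriv f) * Wf f + iota f * Dx (Wf f)) = 0" by simp
  then have "Wf f ^ 2 * iota (formal_deriv f) + (iota f * Wf f) * Dx (Wf f) = 0"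
    by (simp add: algebra_simps power2_eq_square)
  then show ?thesis unfolding iota_W[OF assms] by (simp add: eq_neg_iff_add_eq_0 add.commute)
qed

lemma fls_const_of_nat: "fls_const (of_nat n) = (of_nat n :: 'a::comm_ring_1 fls)"
  by (induction n) (simp_all add: fls_plus_const[symmetric])

lemma gen_to_fls:
  fixes f :: "'a::comm_ring_1 poly"
  assumes "k \<le> degree f * (l + 1)"
  shows "fps_to_fls (gen_fps f l k) = of_nat (fact l) * iota (monom 1 k) * Wf f ^ (l + 1)"
proof -
  have "of_nat (fact l) * iota (monom 1 k) * Wf f ^ (l + 1) =
      of_nat (fact l) * (fls_X_inv ^ k * fls_X ^ (degree f * (l + 1))) * fps_to_fls (rev_inv f) ^ (l + 1)"
  proof -
    have "Wf f ^ (l+1) = fls_X ^ (degree f * (l+1)) * fps_to_fls (rev_inv f) ^ (l+1)"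
      unfolding Wf_def power_mult_distrib power_mult ..
    then show ?thesis unfolding iota_monom1 by (simp only: ac_simps)
  qed
  also have "\<dots> = of_nat (fact l) * fls_X ^ (degree f * (l + 1) - k) * fps_to_fls (rev_inv f) ^ (l + 1)"
    unfolding X_pow_X_inv_pow[OF assms] ..
  also have "\<dots> = fps_to_fls (gen_fps f l k)"
    unfolding gen_fps_def by (simp add: fls_times_fps_to_fls fps_to_fls_power fls_const_of_nat)
  finally show ?thesis ..
qed



lemma span_gens_0: "0 \<in> span_gens f I"
  unfolding span_gens_def by (rule CollectI, rule exI[of _ "{}"]) simp

lemma fps_const_plus_mult: "fps_const (a + b) * g = fps_const a * g + fps_const (b::'a::comm_ring_1) * g"
  by (simp add: distrib_right[symmetric])

lemma span_gens_add:
  assumes "a \<in> span_gens f I" "b \<in> span_gens f I"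
  shows "a + b \<in> span_gens f I"
proof -
  obtain S1 c1 where 1: "a = (\<Sum>(l,k)\<in>S1. fps_const (c1 (l,k)) * gen_fps f l k)" "finite S1" "S1 \<subseteq> I"
    using assms(1) unfolding span_gens_def by blast
  obtain S2 c2 where 2: "b = (\<Sum>(l,k)\<in>S2. fps_const (c2 (l,k)) * gen_fps f l k)" "finite S2" "S2 \<subseteq> I"
    using assms(2) unfolding span_gens_def by blast
  define c where "c x = (if x \<in> S1 then c1 x else 0) + (if x \<in> S2 then c2 x else 0)" for x
  have e1: "(\<Sum>(l,k)\<in>S1 \<union> S2. fps_const (if (l,k) \<in> S1 then c1 (l,k) else 0) * gen_fps f l k) = a"
    unfolding 1(1) by (rule sum.mono_neutral_cong_right) (use 1 2 in auto)
  have e2: "(\<Sum>(l,k)\<in>S1 \<union> S2. fps_const (if (l,k) \<in> S2 then c2 (l,k) else 0) * gen_fps f l k) = b"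
    unfolding 2(1) by (rule sum.mono_neutral_cong_right) (use 1 2 in auto)
  have "(\<Sum>(l,k)\<in>S1 \<union> S2. fps_const (c (l,k)) * gen_fps f l k) = a + b"
    unfolding e1[symmetric] e2[symmetric] sum.distrib[symmetric]
    by (rule sum.cong[OF refl]) (auto simp: c_def fps_const_plus_mult)
  then show ?thesis unfolding span_gens_def mem_Collect_eq
    by (intro exI[of _ "S1 \<union> S2"] exI[of _ c]) (use 1 2 in auto)
qed

lemma span_gens_smult:
  assumes "a \<in> span_gens f I"
  shows "fps_const r * a \<in> span_gens f I"
proof -
  obtain S c where 1: "a = (\<Sum>(l,k)\<in>S. fps_const (c (l,k)) * gen_fps f l k)" "finite S" "S \<subseteq> I"
    using assms(1) unfolding span_gens_def by blast
  have "fps_const r * a = (\<Sum>(l,k)\<in>S. fps_const (r * c (l,k)) * gen_fps f l k)"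
    unfolding 1(1) sum_distrib_left
  proof (rule sum.cong[OF refl])
    fix x assume "x \<in> S"
    obtain l k where x: "x = (l,k)" by (cases x)
    show "fps_const r * (case x of (l, k) \<Rightarrow> fps_const (c (l, k)) * gen_fps f l k) =
      (case x of (l, k) \<Rightarrow> fps_const (r * c (l, k)) * gen_fps f l k)"
      unfolding x prod.case by (simp only: mult.assoc[symmetric] fps_const_mult)
  qed
  then show ?thesis unfolding span_gens_def mem_Collect_eq
    by (intro exI[of _ S] exI[of _ "\<lambda>x. r * c x"]) (use 1 in auto)
qed

lemma span_gens_neg: "a \<in> span_gens f I \<Longrightarrow> - a \<in> span_gens f I"
  using span_gens_smult[of a f I "-1"] by (simp add: fps_const_neg[symmetric])

lemma span_gens_diff: "a \<in> span_gens f I \<Longrightarrow> b \<in> span_gens f I \<Longrightarrow> a - b \<in> span_gens f I"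
  using span_gens_add[of a f I "- b"] span_gens_neg[of b f I] by simp

lemma span_gens_sum: "(\<And>i. i \<in> A \<Longrightarrow> g i \<in> span_gens f I) \<Longrightarrow> (\<Sum>i\<in>A. g i) \<in> span_gens f I"
  by (induction A rule: infinite_finite_induct) (auto intro: span_gens_add span_gens_0)

lemma span_gens_gen: "(l,k) \<in> I \<Longrightarrow> fps_const r * gen_fps f l k \<in> span_gens f I"
  unfolding span_gens_def
  by (rule CollectI, rule exI[of _ "{(l,k)}"], rule exI[of _ "\<lambda>_. r"]) simp

definition Epoly :: "'a::comm_ring_1 poly \<Rightarrow> nat \<Rightarrow> 'a poly \<Rightarrow> 'a fps" where
  "Epoly f l q = (\<Sum>k\<le>degree q. fps_const (coeff q k) * gen_fps f l k)"

lemma Epoly_circ: "degree q + 2 \<le> degree f * (l + 1) \<Longrightarrow> Epoly f l q \<in> O_f_circ f"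
  unfolding Epoly_def O_f_circ_def by (intro span_gens_sum span_gens_gen) auto

lemma Epoly_Of: "degree q + 1 \<le> degree f * (l + 1) \<Longrightarrow> Epoly f l q \<in> O_f f"
  unfolding Epoly_def O_f_def by (intro span_gens_sum span_gens_gen) auto

lemma iota_as_sum: "iota q = (\<Sum>k\<le>degree q. fls_const (coeff q k) * iota (monom 1 k))"
proof -
  have "iota q = iota (\<Sum>k\<le>degree q. monom (coeff q k) k)" by (simp add: poly_as_sum_of_monoms)
  also have "\<dots> = (\<Sum>k\<le>degree q. fls_const (coeff q k) * iota (monom 1 k))"
    unfolding iota_sum by (rule sum.cong[OF refl]) (simp add: iota_monom iota_monom1)
  finally show ?thesis .
qed

lemma fps_to_fls_sum: "fps_to_fls (\<Sum>i\<in>A. g i) = (\<Sum>i\<in>A. fps_to_fls (g i))"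
  by (induction A rule: infinite_finite_induct) auto

lemma Epoly_fls:
  assumes "degree q \<le> degree f * (l + 1)"
  shows "fps_to_fls (Epoly f l q) = of_nat (fact l) * iota q * Wf f ^ (l + 1)"
proof -
  have "fps_to_fls (Epoly f l q) = (\<Sum>k\<le>degree q. fls_const (coeff q k) * fps_to_fls (gen_fps f l k))"
    unfolding Epoly_def by (simp add: fps_to_fls_sum fls_times_fps_to_fls)
  also have "\<dots> = (\<Sum>k\<le>degree q. fls_const (coeff q k) * iota (monom 1 k)) * (of_nat (fact l) * Wf f ^ (l + 1))"
    unfolding sum_distrib_right
    by (rule sum.cong[OF refl]) (use assms in \<open>simp add: gen_to_fls algebra_simps\<close>)
  also have "\<dots> = of_nat (fact l) * iota q * Wf f ^ (l + 1)"
    unfolding iota_as_sum[symmetric] by (simp add: algebra_simps)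
  finally show ?thesis .
qed



definition Tset :: "'a::comm_ring_1 poly \<Rightarrow> 'a fls set" where
  "Tset f = {G. \<exists>g\<in>O_f f. \<exists>h. G = Dx (fps_to_fls g) + iota h * Wf f}"

lemma T_add: "a \<in> Tset f \<Longrightarrow> b \<in> Tset f \<Longrightarrow> a + b \<in> Tset f"
proof -
  assume "a \<in> Tset f" "b \<in> Tset f"
  then obtain g1 h1 g2 h2 where 1: "g1 \<in> O_f f" "a = Dx (fps_to_fls g1) + iota h1 * Wf f"
    and 2: "g2 \<in> O_f f" "b = Dx (fps_to_fls g2) + iota h2 * Wf f"
    unfolding Tset_def by blast
  have "a + b = Dx (fps_to_fls (g1 + g2)) + iota (h1 + h2) * Wf f"
    unfolding 1 2 by (simp add: Dx_add iota_add algebra_simps)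
  moreover have "g1 + g2 \<in> O_f f" using 1(1) 2(1) unfolding O_f_def by (rule span_gens_add)
  ultimately show ?thesis unfolding Tset_def by blast
qed

lemma T_smult: "a \<in> Tset f \<Longrightarrow> fls_const r * a \<in> Tset f"
proof -
  assume "a \<in> Tset f"
  then obtain g h where 1: "g \<in> O_f f" "a = Dx (fps_to_fls g) + iota h * Wf f"
    unfolding Tset_def by blast
  have "fls_const r * a = Dx (fps_to_fls (fps_const r * g)) + iota (smult r h) * Wf f"
    unfolding 1 by (simp add: fls_times_fps_to_fls Dx_const_mult iota_smult algebra_simps)
  moreover have "fps_const r * g \<in> O_f f" using 1(1) unfolding O_f_def by (rule span_gens_smult)
  ultimately show ?thesis unfolding Tset_def by blast
qed

lemma T_of_nat: "a \<in> Tset f \<Longrightarrow> of_nat n * a \<in> Tset f"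
  using T_smult[of a f "of_nat n"] by (simp add: fls_const_of_nat)

lemma T_neg: "a \<in> Tset f \<Longrightarrow> - a \<in> Tset f"
  using T_smult[of a f "-1"] by simp

lemma T_diff: "a \<in> Tset f \<Longrightarrow> b \<in> Tset f \<Longrightarrow> a - b \<in> Tset f"
  using T_add[of a f "- b"] T_neg[of b f] by simp

lemma T_0: "0 \<in> Tset f"
  unfolding Tset_def using span_gens_0[of f] unfolding O_f_def
  by (intro CollectI bexI[of _ 0] exI[of _ 0]) (auto simp: Dx_def)

lemma T_sum: "(\<And>i. i \<in> A \<Longrightarrow> g i \<in> Tset f) \<Longrightarrow> (\<Sum>i\<in>A. g i) \<in> Tset f"
  by (induction A rule: infinite_finite_induct) (auto intro: T_add T_0)

lemma T_Dx: "g \<in> O_f f \<Longrightarrow> Dx (fps_to_fls g) \<in> Tset f"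
  unfolding Tset_def by (intro CollectI bexI[of _ g] exI[of _ 0]) auto

lemma T_H: "iota h * Wf f \<in> Tset f"
  unfolding Tset_def using span_gens_0[of f] unfolding O_f_def
  by (intro CollectI bexI[of _ 0] exI[of _ h]) (auto simp: Dx_def)

lemma Dx_of_nat: "Dx (of_nat n) = 0" unfolding Dx_def by simp

lemma degree_formal_deriv_le: "degree (formal_deriv p) \<le> degree p - 1"
  by (rule degree_le) (auto simp: coeff_formal_deriv coeff_eq_0)

lemma degree_monic_mult:
  fixes f a :: "'a::comm_ring_1 poly"
  assumes "lead_coeff f = 1" and False: "a \<noteq> 0"
  shows "degree (f * a) = degree f + degree a"
proof -
  have "coeff (f * a) (degree f + degree a) = lead_coeff a" using assms by (simp add: coeff_mult_degree_sum)
  then have "degree f + degree a \<le> degree (f * a)" using False by (intro le_degree) simp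
  moreover have "degree (f * a) \<le> degree f + degree a" by (rule degree_mult_le)
  ultimately show ?thesis by simp
qed

lemma aux_bez: "q * w = f * c + b \<Longrightarrow> fp * w = 1 + f * t \<Longrightarrow> (q::'b::comm_ring_1) = f * (c * fp - q * t) + b * fp"
proof -
  assume 1: "q * w = f * c + b" and 2: "fp * w = 1 + f * t"
  have "q = q * (fp * w) - q * f * t" using 2 by (simp add: algebra_simps)
  also have "\<dots> = fp * (q * w) - q * f * t" by (simp add: algebra_simps)
  also have "\<dots> = f * (c * fp - q * t) + b * fp" unfolding 1 by (simp add: algebra_simps)
  finally show ?thesis .
qed

lemma aux_W: "F * Wv = 1 \<Longrightarrow> (F * A + B * Fp) * Wv ^ Suc (Suc l) = A * Wv ^ Suc l + B * Fp * Wv ^ Suc (Suc l)"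
  for F Wv A B Fp :: "'b::comm_ring_1"
proof -
  assume h: "F * Wv = 1"
  have "(F * A + B * Fp) * Wv ^ Suc (Suc l) = A * (F * Wv) * Wv ^ Suc l + B * Fp * Wv ^ Suc (Suc l)"
    by (simp only: power_Suc[of Wv "Suc l"] algebra_simps)
  then show ?thesis using h by simp
qed

lemma aux_final:
  fixes A B Bp Fp Wv :: "'b::comm_ring_1"
  shows "of_nat (fact (Suc l)) * (A * Wv ^ Suc l + B * Fp * Wv ^ Suc (Suc l)) =
    of_nat (Suc l) * (of_nat (fact l) * A * Wv ^ Suc l) + of_nat (fact l) * Bp * Wv ^ Suc l -
    of_nat (fact l) * (Bp * Wv ^ Suc l + B * (of_nat (Suc l) * Wv ^ l * (- (Wv ^ 2 * Fp))))"
proof -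
  have "Wv ^ Suc (Suc l) = Wv ^ l * Wv ^ 2" by (simp add: power_add[symmetric])
  then show ?thesis by (simp add: algebra_simps)
qed

lemma reduce:
  fixes f w t :: "'a::comm_ring_1 poly"
  assumes monic: "lead_coeff f = 1" and d2: "degree f \<ge> 2"
    and bez: "formal_deriv f * w = 1 + f * t"
  shows "degree q + 2 \<le> degree f * (l + 1) \<Longrightarrow> of_nat (fact l) * iota q * Wf f ^ (l + 1) \<in> Tset f"
proof (induction l arbitrary: q)
  case 0
  then show ?case using T_H[of q f] by simp
next
  case (Suc l)
  define d where "d = degree f"
  obtain c b where pd: "pseudo_divmod (q * w) f = (c, b)" by (cases "pseudo_divmod (q * w) f")
  have f0: "f \<noteq> 0" using monic by auto
  have qw: "q * w = f * c + b" using pseudo_divmod(1)[OF f0 pd] monic by simp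
  have degb: "b = 0 \<or> degree b < d" using pseudo_divmod(2)[OF f0 pd] unfolding d_def .
  then have degb': "degree b \<le> d - 1" by auto
  define a where "a = c * formal_deriv f - q * t"
  have qa: "q = f * a + b * formal_deriv f" unfolding a_def by (rule aux_bez[OF qw bez])
  have degfp: "degree (formal_deriv f) \<le> d - 1" unfolding d_def by (rule degree_formal_deriv_le)
  have "degree (b * formal_deriv f) \<le> (d - 1) + (d - 1)"
    using degree_mult_le[of b "formal_deriv f"] degb' degfp by linarith
  then have "degree (b * formal_deriv f) + 2 \<le> d * (Suc l + 1)" using d2 unfolding d_def by (simp add: algebra_simps)
  moreover have "f * a = q - b * formal_deriv f" using qa by simp
  then have "degree (f * a) \<le> max (degree q) (degree (b * formal_deriv f))"
    using degree_diff_le_max[of q "b * formal_deriv f"] by simp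
  ultimately have "degree (f * a) + 2 \<le> d * (Suc l + 1)"
    using Suc.prems unfolding d_def by (auto simp: max_def split: if_splits)
  then have dega: "degree a + 2 \<le> degree f * (l + 1)"
  proof (cases "a = 0")
    case True
    then show ?thesis using d2 by (simp add: algebra_simps)
  next
    case False
    then show ?thesis using \<open>degree (f * a) + 2 \<le> d * (Suc l + 1)\<close>
      unfolding degree_monic_mult[OF monic False] d_def by (simp add: algebra_simps)
  qed
  have X1: "of_nat (fact l) * iota a * Wf f ^ (l + 1) \<in> Tset f" by (rule Suc.IH[OF dega])
  have dd: "d \<le> d * (l + 1)" by simp
  have "degree (formal_deriv b) + 2 \<le> d"
    using degree_formal_deriv_le[of b] degb' d2 unfolding d_def by arith
  then have "degree (formal_deriv b) + 2 \<le> degree f * (l + 1)" using dd unfolding d_def by linarith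
  then have X2: "of_nat (fact l) * iota (formal_deriv b) * Wf f ^ (l + 1) \<in> Tset f" by (rule Suc.IH)
  have "degree b + 1 \<le> d" using degb' d2 unfolding d_def by arith
  then have degb1: "degree b + 1 \<le> degree f * (l + 1)" using dd unfolding d_def by linarith
  have X3: "Dx (fps_to_fls (Epoly f l b)) \<in> Tset f" by (rule T_Dx[OF Epoly_Of[OF degb1]])
  have EF: "fps_to_fls (Epoly f l b) = of_nat (fact l) * iota b * Wf f ^ (l + 1)"
    by (rule Epoly_fls) (use degb1 in simp)
  have DxE: "Dx (of_nat (fact l) * iota b * Wf f ^ (l + 1)) =
      of_nat (fact l) * (iota (formal_deriv b) * Wf f ^ Suc l + iota b * (of_nat (Suc l) * Wf f ^ l * (- (Wf f ^ 2 * iota (formal_deriv f)))))"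
    by (simp only: mult.assoc Dx_of_nat_mult Dx_mult Dx_power Dx_iota Dx_W[OF monic] Suc_eq_plus1[symmetric] Dx_of_nat mult_zero_left add_0)
  have "of_nat (fact (Suc l)) * iota q * Wf f ^ (Suc l + 1) =
     of_nat (fact (Suc l)) * ((iota f * iota a + iota b * iota (formal_deriv f)) * Wf f ^ Suc (Suc l))"
    unfolding qa iota_add iota_mult by (simp add: mult.assoc)
  also have "\<dots> = of_nat (fact (Suc l)) * (iota a * Wf f ^ Suc l + iota b * iota (formal_deriv f) * Wf f ^ Suc (Suc l))"
    using aux_W[OF iota_W[OF monic]] by simp
  also have "\<dots> = of_nat (Suc l) * (of_nat (fact l) * iota a * Wf f ^ Suc l) + of_nat (fact l) * iota (formal_deriv b) * Wf f ^ Suc l -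
    Dx (of_nat (fact l) * iota b * Wf f ^ (l + 1))"
    unfolding DxE by (rule aux_final)
  finally have eq: "of_nat (fact (Suc l)) * iota q * Wf f ^ (Suc l + 1) =
     of_nat (Suc l) * (of_nat (fact l) * iota a * Wf f ^ (l + 1)) + of_nat (fact l) * iota (formal_deriv b) * Wf f ^ (l + 1) -
     Dx (fps_to_fls (Epoly f l b))" unfolding EF by simp
  show ?case unfolding eq by (intro T_diff T_add T_of_nat X1 X2 X3)
qed



lemma bez_exists:
  fixes f :: "'a::comm_ring_1 poly"
  assumes disc: "monic_discriminant f dvd 1" and d2: "degree f \<ge> 2"
  shows "\<exists>w t. formal_deriv f * w = 1 + f * t"
proof -
  define r where "r = resultant f (formal_deriv f)"
  have "r dvd 1" using disc unfolding monic_discriminant_def r_def by (rule dvd_mult_right)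
  then obtain k where k: "1 = r * k" by (rule dvdE)
  obtain u v where uv: "[:r:] = u * f + v * formal_deriv f"
    using resultant_bezout[of f "formal_deriv f"] d2 unfolding r_def by auto
  have "formal_deriv f * smult k v = smult k (v * formal_deriv f)" by (simp add: algebra_simps)
  also have "v * formal_deriv f = [:r:] - u * f" using uv by simp
  also have "smult k ([:r:] - u * f) = [:r * k:] - f * smult k u" by (simp add: smult_diff_right mult.commute)
  also have "[:r * k:] = (1 :: 'a poly)" unfolding k[symmetric] by (rule one_pCons[symmetric])
  also have "1 - f * smult k u = 1 + f * (- smult k u)" by simp
  finally show ?thesis by blast
qed

lemma rec_from_fps:
  fixes f :: "'a::comm_ring_1 poly" and G :: "'a fps"
  assumes H: "\<And>m. m > degree f \<Longrightarrow> (fps_of_poly (reflect_poly f) * G) $ m = 0"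
  shows "(\<Sum>k\<le>degree f. coeff f k * G $ (j + k + 1)) = 0"
proof -
  define d where "d = degree f"
  define F where "F = fps_of_poly (reflect_poly f)"
  have "0 = (F * G) $ (j + d + 1)" using H unfolding F_def d_def by simp
  also have "\<dots> = (\<Sum>i=0..j+d+1. F$i * G$(j+d+1-i))" by (rule fps_mult_nth)
  also have "\<dots> = (\<Sum>i=0..d. F$i * G$(j+d+1-i))"
  proof (rule sum.mono_neutral_right)
    show "\<forall>i\<in>{0..j + d + 1} - {0..d}. F $ i * G $ (j + d + 1 - i) = 0"
      unfolding F_def d_def by (auto simp: coeff_reflect_poly)
  qed auto
  also have "\<dots> = (\<Sum>k\<le>d. coeff f k * G $ (j + k + 1))"
    by (rule sum.reindex_bij_witness[of _ "\<lambda>k. d - k" "\<lambda>i. d - i"]) (auto simp: F_def d_def coeff_reflect_poly Suc_diff_le)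
  finally show ?thesis unfolding d_def by simp
qed

lemma fls_X_pow_mult_nth: "fls_nth (fls_X ^ n * (G :: 'a::comm_ring_1 fls)) m = fls_nth G (m - int n)"
  by (simp add: fls_X_power_conv_shift_1 fls_shifted_times_simps)

lemma d_form_nth: "d_form G $ Suc m = - (of_nat m * G $ m)" "d_form G $ 0 = 0"
proof -
  show "d_form G $ 0 = 0" unfolding d_form_def by (simp add: fps_X_power_mult_nth)
  show "d_form G $ Suc m = - (of_nat m * G $ m)"
  proof (cases m)
    case 0
    then show ?thesis unfolding d_form_def by (simp add: fps_X_power_mult_nth)
  next
    case (Suc m')
    then show ?thesis unfolding d_form_def by (simp add: fps_X_power_mult_nth)
  qed
qed

lemma vv_exists:
  fixes f :: "'a::comm_ring_1 poly"
  assumes monic: "lead_coeff f = 1" and d1: "degree f \<ge> 1"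
  shows "\<exists>vv. (\<forall>j. (\<Sum>k\<le>degree f. coeff f k * vv (j+k)) = 0) \<and>
      (\<forall>j. j < degree f \<longrightarrow> vv j = (if j = degree f - 1 then 1 else 0))"
proof -
  define G where "G = fps_X ^ degree f * rev_inv f"
  have FV: "fps_of_poly (reflect_poly f) * rev_inv f = 1" by (rule Fr_rev_inv[OF monic])
  have V0: "rev_inv f $ 0 = 1"
  proof -
    have "(fps_of_poly (reflect_poly f) * rev_inv f) $ 0 = 1" unfolding FV by simp
    then show ?thesis using monic by simp
  qed
  have "(fps_of_poly (reflect_poly f) * G) $ m = 0" if "m > degree f" for m
  proof -
    have "fps_of_poly (reflect_poly f) * G = fps_X ^ degree f" unfolding G_def
      by (metis FV mult.left_commute mult_1_right)
    then show ?thesis using that by (simp add: fps_X_power_nth)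
  qed
  then have rec: "(\<Sum>k\<le>degree f. coeff f k * G $ (j + k + 1)) = 0" for j by (rule rec_from_fps)
  define vv where "vv n = G $ Suc n" for n
  have "(\<Sum>k\<le>degree f. coeff f k * vv (j+k)) = 0" for j unfolding vv_def using rec[of j] by simp
  moreover have "vv j = (if j = degree f - 1 then 1 else 0)" if "j < degree f" for j
    unfolding vv_def G_def using that V0 d1 by (auto simp: fps_X_power_mult_nth)
  ultimately show ?thesis by blast
qed

lemma eta_zero:
  fixes f w t :: "'a::comm_ring_1 poly"
  assumes monic: "lead_coeff f = 1" and d2: "degree f \<ge> 2"
    and bez: "formal_deriv f * w = 1 + f * t" and pp: "prime p"
    and sep: "p_adically_separated p TYPE('a)"
    and eta: "\<eta> = d_form G" and fl: "fps_to_fls \<eta> = iota h * Wf f"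
  shows "\<eta> = 0"
proof -
  have d1: "degree f \<ge> 1" using d2 by simp
  obtain vv where vrec: "\<And>j. (\<Sum>k\<le>degree f. coeff f k * vv (j+k)) = 0"
    and vinit: "\<And>j. j < degree f \<Longrightarrow> vv j = (if j = degree f - 1 then 1 else 0)"
    using vv_exists[OF monic d1] by blast
  define u where "u n = \<eta> $ Suc n" for n
  have u0: "u 0 = 0" unfolding u_def eta d_form_nth by simp
  have udvd: "of_nat n dvd u n" if "n \<ge> 1" for n
    unfolding u_def eta d_form_nth by simp
  have FH: "(fps_of_poly (reflect_poly f) * \<eta>) $ m = 0" if "m > degree f" for m
  proof -
    have "fps_to_fls (fps_of_poly (reflect_poly f) * \<eta>) = fls_X ^ degree f * iota f * (iota h * Wf f)"
      unfolding fls_times_fps_to_fls Fr_to_fls fl ..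
    also have "\<dots> = fls_X ^ degree f * iota h * (iota f * Wf f)" by (simp only: ac_simps)
    also have "\<dots> = fls_X ^ degree f * iota h" unfolding iota_W[OF monic] by simp
    finally have "fls_nth (fps_to_fls (fps_of_poly (reflect_poly f) * \<eta>)) (int m) = fls_nth (iota h) (int m - int (degree f))"
      by (simp add: fls_X_pow_mult_nth)
    also have "\<dots> = 0" using that by (intro iota_nth_pos) simp
    finally show ?thesis by simp
  qed
  have urec: "(\<Sum>k\<le>degree f. coeff f k * u (j+k)) = 0" for j
    unfolding u_def using rec_from_fps[OF FH, of j] by simp
  have uz: "u n = 0" for n
    by (rule padic_zero[OF monic d1 bez pp vrec vinit sep urec u0 udvd])
  show ?thesis
  proof (rule fps_ext)
    fix n show "\<eta> $ n = 0 $ n"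
    proof (cases n)
      case 0 then show ?thesis unfolding eta by (simp add: d_form_nth)
    next
      case (Suc m) then show ?thesis using uz[of m] unfolding u_def by simp
    qed
  qed
qed



lemma Omega_to_T:
  fixes f w t :: "'a::comm_ring_1 poly"
  assumes monic: "lead_coeff f = 1" and d2: "degree f \<ge> 2"
    and bez: "formal_deriv f * w = 1 + f * t"
    and om: "\<omega> \<in> O_f_circ f"
  shows "fps_to_fls \<omega> \<in> Tset f"
proof -
  obtain S c where 1: "\<omega> = (\<Sum>(l,k)\<in>S. fps_const (c (l,k)) * gen_fps f l k)" "finite S"
      "S \<subseteq> {(l,k). k + 2 \<le> degree f * (l + 1)}"
    using om unfolding O_f_circ_def span_gens_def by blast
  have "fps_to_fls \<omega> = (\<Sum>x\<in>S. fls_const (c x) * fps_to_fls (gen_fps f (fst x) (snd x)))"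
    unfolding 1(1) fps_to_fls_sum by (rule sum.cong[OF refl]) (auto simp: fls_times_fps_to_fls)
  also have "\<dots> \<in> Tset f"
  proof (rule T_sum)
    fix x assume x: "x \<in> S"
    obtain l k where lk: "x = (l,k)" by (cases x)
    have k: "k + 2 \<le> degree f * (l + 1)" using x 1(3) lk by auto
    have "fps_to_fls (gen_fps f l k) = of_nat (fact l) * iota (monom 1 k) * Wf f ^ (l + 1)"
      by (rule gen_to_fls) (use k in simp)
    moreover have "of_nat (fact l) * iota (monom 1 k) * Wf f ^ (l + 1) \<in> Tset f"
    proof (rule reduce[OF monic d2 bez])
      show "degree (monom (1::'a) k) + 2 \<le> degree f * (l + 1)" using k degree_monom_le[of "1::'a" k] by linarith
    qed
    ultimately show "fls_const (c x) * fps_to_fls (gen_fps f (fst x) (snd x)) \<in> Tset f"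
      unfolding lk by (auto intro: T_smult)
  qed
  finally show ?thesis .
qed

lemma gen_nth0: "k + 1 \<le> degree f * (l + 1) \<Longrightarrow> gen_fps f l k $ 0 = 0"
  unfolding gen_fps_def by (simp add: mult.assoc fps_X_power_mult_nth)

lemma Of_formal: "g \<in> O_f f \<Longrightarrow> g \<in> O_formal"
proof -
  assume "g \<in> O_f f"
  then obtain S c where 1: "g = (\<Sum>(l,k)\<in>S. fps_const (c (l,k)) * gen_fps f l k)" "finite S"
      "S \<subseteq> {(l,k). k + 1 \<le> degree f * (l + 1)}"
    unfolding O_f_def span_gens_def by blast
  have "g $ 0 = (\<Sum>x\<in>S. c x * gen_fps f (fst x) (snd x) $ 0)"
    unfolding 1(1) fps_sum_nth by (rule sum.cong[OF refl]) auto
  also have "\<dots> = 0" using 1(3) by (intro sum.neutral) (auto simp: gen_nth0)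
  finally show ?thesis unfolding O_formal_def by simp
qed

lemma d_form_add: "d_form (a + b) = d_form a + d_form b" unfolding d_form_def by (simp add: algebra_simps)
lemma d_form_diff: "d_form (a - b) = d_form a - d_form b" unfolding d_form_def by (simp add: algebra_simps)
lemma d_form_const: "d_form (fps_const c * a) = fps_const c * d_form a" unfolding d_form_def by (simp add: algebra_simps)
lemma d_form_0: "d_form 0 = 0" unfolding d_form_def by simp
lemma d_form_sum: "d_form (\<Sum>i\<in>A. g i) = (\<Sum>i\<in>A. d_form (g i))"
  by (induction A rule: infinite_finite_induct) (auto simp: d_form_add d_form_0)

lemma aux_dgen:
  fixes A B Fp Wv :: "'b::comm_ring_1"
  shows "of_nat (fact l) * (A * Wv ^ Suc l + B * (of_nat (Suc l) * Wv ^ l * (- (Wv ^ 2 * Fp)))) =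
    of_nat (fact l) * A * Wv ^ (l + 1) - of_nat (fact (Suc l)) * (B * Fp) * Wv ^ (Suc l + 1)"
proof -
  have "Wv ^ (Suc l + 1) = Wv ^ l * Wv ^ 2" by (simp add: power_add[symmetric])
  then show ?thesis by (simp add: algebra_simps)
qed

lemma d_gen_circ:
  fixes f :: "'a::comm_ring_1 poly"
  assumes monic: "lead_coeff f = 1" and d2: "degree f \<ge> 2"
    and k: "k + 1 \<le> degree f * (l + 1)"
  shows "d_form (gen_fps f l k) \<in> O_f_circ f"
proof -
  define q :: "'a poly" where "q = monom 1 k"
  have dq: "degree q \<le> k" unfolding q_def by (rule degree_monom_le)
  have dqd: "degree (formal_deriv q) + 2 \<le> degree f * (l + 1)"
  proof -
    have "degree (formal_deriv q) \<le> degree q - 1" by (rule degree_formal_deriv_le)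
    moreover have "2 \<le> degree f * (l + 1)" using d2 by (metis le_add1 mult_le_mono2 nat_mult_1_right order_trans add.commute)
    ultimately show ?thesis using dq k by arith
  qed
  have dqf: "degree (q * formal_deriv f) + 2 \<le> degree f * (Suc l + 1)"
  proof -
    have "degree (q * formal_deriv f) \<le> degree q + degree (formal_deriv f)" by (rule degree_mult_le)
    moreover have "degree (formal_deriv f) \<le> degree f - 1" by (rule degree_formal_deriv_le)
    ultimately show ?thesis using dq k d2 by (simp add: algebra_simps)
  qed
  have "fps_to_fls (d_form (gen_fps f l k)) = Dx (of_nat (fact l) * iota q * Wf f ^ (l + 1))"
    unfolding fps_to_fls_d_form q_def using k by (subst gen_to_fls) simp_all
  also have "\<dots> = of_nat (fact l) * (iota (formal_deriv q) * Wf f ^ Suc l + iota q * (of_nat (Suc l) * Wf f ^ l * (- (Wf f ^ 2 * iota (formal_deriv f)))))"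
    by (simp only: mult.assoc Dx_of_nat_mult Dx_mult Dx_power Dx_iota Dx_W[OF monic] Suc_eq_plus1[symmetric] Dx_of_nat mult_zero_left add_0)
  also have "\<dots> = of_nat (fact l) * iota (formal_deriv q) * Wf f ^ (l + 1) - of_nat (fact (Suc l)) * iota (q * formal_deriv f) * Wf f ^ (Suc l + 1)"
    unfolding iota_mult by (rule aux_dgen)
  also have "\<dots> = fps_to_fls (Epoly f l (formal_deriv q) - Epoly f (Suc l) (q * formal_deriv f))"
    using dqd dqf by (simp add: Epoly_fls)
  finally have "d_form (gen_fps f l k) = Epoly f l (formal_deriv q) - Epoly f (Suc l) (q * formal_deriv f)"
    by (rule fps_to_fls_eq_imp_fps_eq)
  also have "\<dots> \<in> O_f_circ f"
    unfolding O_f_circ_def by (intro span_gens_diff Epoly_circ[unfolded O_f_circ_def] dqd dqf)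
  finally show ?thesis .
qed

lemma d_Of_circ:
  fixes f :: "'a::comm_ring_1 poly"
  assumes monic: "lead_coeff f = 1" and d2: "degree f \<ge> 2"
    and g: "g \<in> O_f f"
  shows "d_form g \<in> O_f_circ f"
proof -
  obtain S c where 1: "g = (\<Sum>(l,k)\<in>S. fps_const (c (l,k)) * gen_fps f l k)" "finite S"
      "S \<subseteq> {(l,k). k + 1 \<le> degree f * (l + 1)}"
    using g unfolding O_f_def span_gens_def by blast
  have "d_form g = (\<Sum>x\<in>S. fps_const (c x) * d_form (gen_fps f (fst x) (snd x)))"
    unfolding 1(1) d_form_sum by (rule sum.cong[OF refl]) (auto simp: d_form_const)
  also have "\<dots> \<in> O_f_circ f"
    unfolding O_f_circ_def
  proof (rule span_gens_sum)
    fix x assume x: "x \<in> S"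
    obtain l k where lk: "x = (l,k)" by (cases x)
    have k: "k + 1 \<le> degree f * (l + 1)" using x 1(3) lk by auto
    show "fps_const (c x) * d_form (gen_fps f (fst x) (snd x)) \<in> span_gens f {(l, k). k + 2 \<le> degree f * (l + 1)}"
      unfolding lk using d_gen_circ[OF monic d2 k] unfolding O_f_circ_def by (auto intro: span_gens_smult)
  qed
  finally show ?thesis .
qed

theorem mainTheorem4:
  fixes f :: "'a::{comm_ring_1, ring_char_0} poly" and p :: nat
  assumes "prime p" and "odd p"
    and "p_adically_separated p TYPE('a)"
    and "p_adically_complete p TYPE('a)"
    and "lead_coeff f = 1" and "degree f \<ge> 2" and "poly f 0 \<noteq> 0"
    and "monic_discriminant f dvd 1"
  shows "Omega_f_circ f \<inter> d_form ` O_formal = d_form ` O_f f"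
proof -
  note pp = assms(1) and sep = assms(3) and monic = assms(5) and d2 = assms(6)
  obtain w t where bez: "formal_deriv f * w = 1 + f * t"
    using bez_exists[OF assms(8) d2] by blast
  show ?thesis
  proof (rule equalityI; rule subsetI)
    fix \<omega> assume "\<omega> \<in> Omega_f_circ f \<inter> d_form ` O_formal"
    then have om: "\<omega> \<in> O_f_circ f" and "\<omega> \<in> d_form ` O_formal" unfolding Omega_f_circ_def by auto
    then obtain G where G: "\<omega> = d_form G" by blast
    have "fps_to_fls \<omega> \<in> Tset f" by (rule Omega_to_T[OF monic d2 bez om])
    then obtain g h where g: "g \<in> O_f f" and gh: "fps_to_fls \<omega> = Dx (fps_to_fls g) + iota h * Wf f"
      unfolding Tset_def by blast
    define \<eta> where "\<eta> = \<omega> - d_form g"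
    have "\<eta> = d_form (G - g)" unfolding \<eta>_def G d_form_diff ..
    moreover have "fps_to_fls \<eta> = iota h * Wf f" unfolding \<eta>_def fps_to_fls_minus gh fps_to_fls_d_form by simp
    ultimately have "\<eta> = 0" by (rule eta_zero[OF monic d2 bez pp sep])
    then have "\<omega> = d_form g" unfolding \<eta>_def by simp
    then show "\<omega> \<in> d_form ` O_f f" using g by blast
  next
    fix \<omega> assume "\<omega> \<in> d_form ` O_f f"
    then obtain g where g: "g \<in> O_f f" and om: "\<omega> = d_form g" by blast
    have "\<omega> \<in> Omega_f_circ f" unfolding om Omega_f_circ_def by (rule d_Of_circ[OF monic d2 g])
    moreover have "\<omega> \<in> d_form ` O_formal" unfolding om using Of_formal[OF g] by blast
    ultimately show "\<omega> \<in> Omega_f_circ f \<inter> d_form ` O_formal" by blast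
  qed
qed


end
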